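(* Let $r\ge 1$, $n\ge r+1$, and let $K$ be a pure $r$-dimensional simplicial complex on $n$ vertices that contains no subcomplex isomorphic to $\Delta_{r+2}^{r+1}$. Then $$\mathfrak{q}_{r-1}(K)\le rn-r^2+1,$$ with equality if and only if $|N^{\mathrm d}(F,u)|=r$ for every $F\in S_r(K)$ and every $u\in V(K)\setminus F$. Furthermore: (1) if $r=1$, equality holds if and only if $K$ is a complete bipartite graph (on all $n$ vertices); (2) if $r\ge 2$ is even, equality holds if and only if $K\cong {\sf T}_n^r$; (3) if $r\ge 3$ is odd, equality holds only if $K\cong{\sf T}_n^r$ or $K$ contains a subcomplex isomorphic to $\Diamond_{r+3}^{r+1}$.
   Context: A (finite abstract) simplicial complex $K$ on a finite vertex set $V(K)$ is a family of subsets of $V(K)$ closed under taking subsets and containing every singleton; it is on $n$ vertices if $|V(K)|=n$. An $i$-face is a member of cardinality $i+1$; $S_i(K)$ is the set of $i$-faces; facets are inclusion-maximal faces; $K$ is pure if all facets have the same dimension. A pure $1$-dimensional complex is identified with a graph without isolated vertices. For an $i$-face $F$, $d_K(F)$ is the number of $(i+1)$-faces containing $F$; two distinct $i$-faces are up-neighbors if their union is an $(i+1)$-face. The signless up Laplacian $Q_i^{\mathrm{up}}(K)$ is the operator on $\mathbb{R}^{S_i(K)}$ given by $(Q_i^{\mathrm{up}}(K)f)(F)=d_K(F)f(F)+\sum_{F'\text{ up-neighbor of }F}f(F')$, and $\mathfrak{q}_i(K)$ is its largest eigenvalue. For $F\in S_r(K)$ and $u\in V(K)\setminus F$, $N^{\mathrm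 d}(F,u)$ is the set of $r$-faces of $K$ of the form $G\cup\{u\}$ with $G\subset F$, $|G|=r$. $\Delta_{r+2}^{r+1}$ is the $r$-dimensional complex on $r+2$ vertices whose facets are all $(r+1)$-element subsets (the boundary of an $(r+1)$-simplex). The tented complex ${\sf T}_n^r$ is the pure $r$-dimensional complex on $[n]$ whose facets are the sets $\{n\}\cup F$ with $F$ an $r$-subset of $[n-1]$. The rhombic complex $\Diamond_{r+3}^{r+1}$ is the pure $r$-dimensional complex on $[r+3]$ whose facets are the sets $\{i\}\cup F$ with $i\in\{r+2,r+3\}$ and $F$ an $r$-subset of $[r+1]$. "Contains" / "isomorphic" refer to subcomplexes up to relabeling of vertices. *)

theory Defs
  imports Complex_Main
begin

definition simplicial_complex :: "'a set \<Rightarrow> 'a set set \<Rightarrow> bool" where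
  "simplicial_complex V K \<longleftrightarrow> finite V \<and> K \<noteq> {} \<and> (\<forall>F\<in>K. F \<subseteq> V) \<and>
     (\<forall>F\<in>K. \<forall>G. G \<subseteq> F \<longrightarrow> G \<in> K) \<and> (\<forall>v\<in>V. {v} \<in> K)"

definition faces :: "'a set set \<Rightarrow> nat \<Rightarrow> 'a set set" where
  "faces K i = {F \<in> K. card F = i + 1}"

definition facet :: "'a set set \<Rightarrow> 'a set \<Rightarrow> bool" where
  "facet K F \<longleftrightarrow> F \<in> K \<and> \<not> (\<exists>G\<in>K. F \<subset> G)"

definition pure_dim :: "'a set set \<Rightarrow> nat \<Rightarrow> bool" where
  "pure_dim K r \<longleftrightarrow> (\<forall>F. facet K F \<longrightarrow> card F = r + 1)"

definition up_degree :: "'a set set \<Rightarrow> nat \<Rightarrow> 'a set \<Rightarrow> nat" where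
  "up_degree K i F = card {G \<in> faces K (i + 1). F \<subseteq> G}"

definition up_neighbors :: "'a set set \<Rightarrow> nat \<Rightarrow> 'a set \<Rightarrow> 'a set \<Rightarrow> bool" where
  "up_neighbors K i F F' \<longleftrightarrow> F \<in> faces K i \<and> F' \<in> faces K i \<and> F \<noteq> F' \<and>
     F \<union> F' \<in> faces K (i + 1)"

definition signless_up_laplacian ::
  "'a set set \<Rightarrow> nat \<Rightarrow> ('a set \<Rightarrow> real) \<Rightarrow> 'a set \<Rightarrow> real" where
  "signless_up_laplacian K i f F =
     real (up_degree K i F) * f F + (\<Sum>F'\<in>{F'. up_neighbors K i F F'}. f F')"

definition is_eigenvalue_Qup :: "'a set set \<Rightarrow> nat \<Rightarrow> real \<Rightarrow> bool" where
  "is_eigenvalue_Qup K i mu \<longleftrightarrow> (\<exists>f. (\<forall>F. F \<notin> faces K i \<longrightarrow> f F = 0) \<and>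
     (\<exists>F\<in>faces K i. f F \<noteq> 0) \<and>
     (\<forall>F\<in>faces K i. signless_up_laplacian K i f F = mu * f F))"

definition q_up :: "'a set set \<Rightarrow> nat \<Rightarrow> real" where
  "q_up K i = Max {mu. is_eigenvalue_Qup K i mu}"

definition N_d :: "'a set set \<Rightarrow> nat \<Rightarrow> 'a set \<Rightarrow> 'a \<Rightarrow> 'a set set" where
  "N_d K r F u = {H \<in> faces K r. \<exists>G. G \<subseteq> F \<and> card G = r \<and> H = G \<union> {u}}"

definition gen_complex :: "'a set set \<Rightarrow> 'a set set" where
  "gen_complex Fs = {G. \<exists>F\<in>Fs. G \<subseteq> F}"

definition Delta_bd :: "nat \<Rightarrow> nat set set" where
  "Delta_bd r = gen_complex {F. F \<subseteq> {1..r+2} \<and> card F = r + 1}"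

definition tented :: "nat \<Rightarrow> nat \<Rightarrow> nat set set" where
  "tented n r = gen_complex {insert n F | F. F \<subseteq> {1..n-1} \<and> card F = r}"

definition rhombic :: "nat \<Rightarrow> nat set set" where
  "rhombic r = gen_complex {insert i F | i F. i \<in> {r+2, r+3} \<and> F \<subseteq> {1..r+1} \<and> card F = r}"

definition contains_copy :: "'a set set \<Rightarrow> nat set \<Rightarrow> nat set set \<Rightarrow> bool" where
  "contains_copy K VL L \<longleftrightarrow> (\<exists>\<phi>. inj_on \<phi> VL \<and> (\<forall>F\<in>L. \<phi> ` F \<in> K))"

definition isomorphic :: "'a set \<Rightarrow> 'a set set \<Rightarrow> nat set \<Rightarrow> nat set set \<Rightarrow> bool" where
  "isomorphic V K VL L \<longleftrightarrow> (\<exists>\<phi>. bij_betw \<phi> V VL \<and> (\<lambda>F. \<phi> ` F) ` K = L)"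

definition complete_bipartite :: "'a set \<Rightarrow> 'a set set \<Rightarrow> bool" where
  "complete_bipartite V K \<longleftrightarrow> (\<exists>A B. A \<inter> B = {} \<and> A \<union> B = V \<and> A \<noteq> {} \<and> B \<noteq> {} \<and>
     faces K 1 = {{a, b} | a b. a \<in> A \<and> b \<in> B})"

end

theory Submission
  imports Defs "Jordan_Normal_Form.Spectral_Radius"
begin

lemma idx_eig_finite:
  fixes a :: "nat \<Rightarrow> nat \<Rightarrow> real"
  shows "finite {\<mu>. \<exists>v. (\<exists>i<m. v i \<noteq> 0) \<and> (\<forall>i<m. (\<Sum>j<m. a i j * v j) = \<mu> * v i)}"
proof -
  define A where "A = mat m m (\<lambda>(i,j). a i j)"
  have A: "A \<in> carrier_mat m m" unfolding A_def by simp
  have "{\<mu>. \<exists>v. (\<exists>i<m. v i \<noteq> 0) \<and> (\<forall>i<m. (\<Sum>j<m. a i j * v j) = \<mu> * v i)} \<subseteq> spectrum A"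
  proof
    fix \<mu> assume "\<mu> \<in> {\<mu>. \<exists>v. (\<exists>i<m. v i \<noteq> 0) \<and> (\<forall>i<m. (\<Sum>j<m. a i j * v j) = \<mu> * v i)}"
    then obtain v where v1: "\<exists>i<m. v i \<noteq> 0" and v2: "\<forall>i<m. (\<Sum>j<m. a i j * v j) = \<mu> * v i" by auto
    define w where "w = vec m v"
    have "w \<in> carrier_vec (dim_row A)" using A unfolding w_def by simp
    moreover have "w \<noteq> 0\<^sub>v (dim_row A)" using v1 A unfolding w_def
      by (metis carrier_matD(1) index_vec index_zero_vec(1))
    moreover have "A *\<^sub>v w = \<mu> \<cdot>\<^sub>v w"
    proof (rule eq_vecI)
      fix i assume "i < dim_vec (\<mu> \<cdot>\<^sub>v w)"
      hence i: "i < m" unfolding w_def by simp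
      have "(A *\<^sub>v w) $ i = row A i \<bullet> w" using A i by simp
      also have "\<dots> = (\<Sum>j<m. a i j * v j)" unfolding scalar_prod_def w_def A_def
        using i by (simp add: atLeast0LessThan)
      also have "\<dots> = \<mu> * v i" using v2 i by simp
      finally show "(A *\<^sub>v w) $ i = (\<mu> \<cdot>\<^sub>v w) $ i" using i unfolding w_def by simp
    qed (use A in \<open>simp add: w_def\<close>)
    ultimately have "eigenvector A w \<mu>" unfolding eigenvector_def by simp
    thus "\<mu> \<in> spectrum A" unfolding spectrum_def eigenvalue_def by auto
  qed
  thus ?thesis using card_finite_spectrum(1)[OF A] finite_subset by blast
qed

lemma idx_eig_nonempty:
  fixes a :: "nat \<Rightarrow> nat \<Rightarrow> real"
  assumes m: "m > 0" and sym: "\<And>i j. a i j = a j i"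
  shows "\<exists>\<mu> v. (\<exists>i<m. v i \<noteq> 0) \<and> (\<forall>i<m. (\<Sum>j<m. a i j * v j) = \<mu> * v i)"
proof -
  define A where "A = mat m m (\<lambda>(i,j). complex_of_real (a i j))"
  have A: "A \<in> carrier_mat m m" unfolding A_def by simp
  obtain lam where "lam \<in> spectrum A" using spectrum_non_empty[OF A m] by auto
  then obtain w where ev: "eigenvector A w lam" unfolding spectrum_def eigenvalue_def by auto
  define c where "c i = w $ i" for i
  have wdim: "dim_vec w = m" using ev A unfolding eigenvector_def by auto
  have cne: "\<exists>i<m. c i \<noteq> 0"
  proof (rule ccontr)
    assume "\<not> ?thesis"
    hence "w = 0\<^sub>v m" using wdim unfolding c_def by (auto intro!: eq_vecI)
    thus False using ev A unfolding eigenvector_def by auto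
  qed
  have eq: "(\<Sum>j<m. complex_of_real (a i j) * c j) = lam * c i" if i: "i < m" for i
  proof -
    have "(A *\<^sub>v w) $ i = (lam \<cdot>\<^sub>v w) $ i" using ev unfolding eigenvector_def by simp
    moreover have "(A *\<^sub>v w) $ i = (\<Sum>j<m. complex_of_real (a i j) * c j)"
      using A i wdim by (simp add: A_def c_def scalar_prod_def atLeast0LessThan)
    moreover have "(lam \<cdot>\<^sub>v w) $ i = lam * c i" using i wdim unfolding c_def by simp
    ultimately show ?thesis by simp
  qed
  define s where "s = (\<Sum>i<m. cnj (c i) * (\<Sum>j<m. complex_of_real (a i j) * c j))"
  define N where "N = (\<Sum>i<m. (cmod (c i))^2)"
  have Npos: "N > 0"
  proof -
    obtain i where "i < m" "c i \<noteq> 0" using cne by auto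
    hence "(cmod (c i))^2 > 0" by simp
    moreover have "(cmod (c i))^2 \<le> N" unfolding N_def
      using \<open>i < m\<close> by (intro member_le_sum) auto
    ultimately show ?thesis by linarith
  qed
  have s1: "s = lam * complex_of_real N"
  proof -
    have "s = (\<Sum>i<m. cnj (c i) * (lam * c i))" unfolding s_def using eq by simp
    also have "\<dots> = lam * (\<Sum>i<m. cnj (c i) * c i)" by (simp add: sum_distrib_left algebra_simps)
    also have "(\<Sum>i<m. cnj (c i) * c i) = complex_of_real N"
    proof -
      have "(\<Sum>i<m. cnj (c i) * c i) = (\<Sum>i<m. complex_of_real ((cmod (c i))^2))"
        by (rule sum.cong[OF refl]) (simp only: complex_norm_square mult.commute)
      thus ?thesis unfolding N_def of_real_sum .
    qed
    finally show ?thesis .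
  qed
  have s2: "cnj s = s"
  proof -
    have "cnj s = (\<Sum>i<m. \<Sum>j<m. complex_of_real (a i j) * (c i * cnj (c j)))"
      unfolding s_def by (simp add: sum_distrib_left algebra_simps)
    also have "\<dots> = (\<Sum>j<m. \<Sum>i<m. complex_of_real (a i j) * (c i * cnj (c j)))"
      by (rule sum.swap)
    also have "\<dots> = (\<Sum>j<m. \<Sum>i<m. complex_of_real (a j i) * (cnj (c j) * c i))"
      using sym by (simp add: algebra_simps)
    also have "\<dots> = s" unfolding s_def by (simp add: sum_distrib_left algebra_simps)
    finally show ?thesis .
  qed
  have "Im s = 0" using arg_cong[OF s2, of Im] by simp
  hence "Im lam * N = 0" using s1 by simp
  hence ImL: "Im lam = 0" using Npos by simp
  define t where "t = Re lam"
  have lamt: "lam = complex_of_real t" using ImL unfolding t_def by (simp add: complex_eq_iff)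
  have eqR: "(\<Sum>j<m. a i j * Re (c j)) = t * Re (c i)" if "i < m" for i
  proof -
    have "Re (\<Sum>j<m. complex_of_real (a i j) * c j) = Re (lam * c i)" using eq[OF that] by simp
    thus ?thesis unfolding lamt by (simp add: Re_sum)
  qed
  have eqI: "(\<Sum>j<m. a i j * Im (c j)) = t * Im (c i)" if "i < m" for i
  proof -
    have "Im (\<Sum>j<m. complex_of_real (a i j) * c j) = Im (lam * c i)" using eq[OF that] by simp
    thus ?thesis unfolding lamt by (simp add: Im_sum)
  qed
  obtain i where i: "i < m" "c i \<noteq> 0" using cne by auto
  show ?thesis
  proof (cases "Re (c i) = 0")
    case True
    hence "Im (c i) \<noteq> 0" using i by (simp add: complex_eq_iff)
    thus ?thesis using eqI i by (intro exI[of _ t] exI[of _ "\<lambda>j. Im (c j)"]) auto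
  next
    case False
    thus ?thesis using eqR i by (intro exI[of _ t] exI[of _ "\<lambda>j. Re (c j)"]) auto
  qed
qed

lemma set_eig:
  fixes M :: "'x \<Rightarrow> 'x \<Rightarrow> real" and S :: "'x set"
  assumes fin: "finite S" and ne: "S \<noteq> {}" and sym: "\<And>x y. M x y = M y x"
  shows "finite {\<mu>. \<exists>f. (\<forall>x. x \<notin> S \<longrightarrow> f x = 0) \<and> (\<exists>x\<in>S. f x \<noteq> 0) \<and>
           (\<forall>x\<in>S. (\<Sum>y\<in>S. M x y * f y) = \<mu> * f x)}" (is "finite ?E")
    and "{\<mu>. \<exists>f. (\<forall>x. x \<notin> S \<longrightarrow> f x = 0) \<and> (\<exists>x\<in>S. f x \<noteq> 0) \<and>
           (\<forall>x\<in>S. (\<Sum>y\<in>S. M x y * f y) = \<mu> * f x)} \<noteq> {}"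
proof -
  define m where "m = card S"
  obtain h where h: "bij_betw h {0..<m} S" using ex_bij_betw_nat_finite[OF fin] unfolding m_def by auto
  have m: "m > 0" using fin ne unfolding m_def by auto
  define a where "a i j = M (h i) (h j)" for i j
  have reix: "(\<Sum>y\<in>S. g y) = (\<Sum>j<m. g (h j))" for g :: "'x \<Rightarrow> real"
    using sum.reindex_bij_betw[OF h, of g] by (simp add: lessThan_atLeast0)
  have "?E \<subseteq> {\<mu>. \<exists>v. (\<exists>i<m. v i \<noteq> 0) \<and> (\<forall>i<m. (\<Sum>j<m. a i j * v j) = \<mu> * v i)}"
  proof
    fix \<mu> assume "\<mu> \<in> ?E"
    then obtain f where f1: "\<exists>x\<in>S. f x \<noteq> 0" and f2: "\<forall>x\<in>S. (\<Sum>y\<in>S. M x y * f y) = \<mu> * f x"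
      by auto
    define v where "v i = f (h i)" for i
    have "\<exists>i<m. v i \<noteq> 0"
    proof -
      obtain x where "x \<in> S" "f x \<noteq> 0" using f1 by auto
      then obtain i where "i < m" "h i = x" using h unfolding bij_betw_def by auto
      thus ?thesis using \<open>f x \<noteq> 0\<close> unfolding v_def by auto
    qed
    moreover have "\<forall>i<m. (\<Sum>j<m. a i j * v j) = \<mu> * v i"
    proof (intro allI impI)
      fix i assume i: "i < m"
      hence hi: "h i \<in> S" using h unfolding bij_betw_def by auto
      have "(\<Sum>j<m. a i j * v j) = (\<Sum>y\<in>S. M (h i) y * f y)"
        unfolding reix a_def v_def ..
      also have "\<dots> = \<mu> * v i" using f2 hi unfolding v_def by auto
      finally show "(\<Sum>j<m. a i j * v j) = \<mu> * v i" .
    qed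
    ultimately show "\<mu> \<in> {\<mu>. \<exists>v. (\<exists>i<m. v i \<noteq> 0) \<and> (\<forall>i<m. (\<Sum>j<m. a i j * v j) = \<mu> * v i)}"
      by blast
  qed
  thus "finite ?E" using idx_eig_finite finite_subset by blast
  have asym: "a i j = a j i" for i j unfolding a_def using sym by simp
  obtain \<mu> v where v1: "\<exists>i<m. v i \<noteq> 0" and v2: "\<forall>i<m. (\<Sum>j<m. a i j * v j) = \<mu> * v i"
    using idx_eig_nonempty[OF m, of a] asym by blast
  define g where "g = inv_into {0..<m} h"
  have gh: "g (h j) = j" if "j < m" for j
    using h that unfolding g_def bij_betw_def by (simp add: inv_into_f_f)
  have hg: "h (g x) = x" "g x < m" if "x \<in> S" for x
    using h that unfolding g_def bij_betw_def
    by (auto simp add: f_inv_into_f inv_into_into[of x h "{0..<m}", simplified])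
  define f where "f x = (if x \<in> S then v (g x) else 0)" for x
  have "(\<forall>x. x \<notin> S \<longrightarrow> f x = 0) \<and> (\<exists>x\<in>S. f x \<noteq> 0) \<and>
           (\<forall>x\<in>S. (\<Sum>y\<in>S. M x y * f y) = \<mu> * f x)"
  proof (intro conjI ballI allI impI)
    show "x \<notin> S \<Longrightarrow> f x = 0" for x unfolding f_def by simp
    obtain i where i: "i < m" "v i \<noteq> 0" using v1 by auto
    have "h i \<in> S" using h i unfolding bij_betw_def by auto
    moreover have "f (h i) \<noteq> 0" using i \<open>h i \<in> S\<close> gh unfolding f_def by simp
    ultimately show "\<exists>x\<in>S. f x \<noteq> 0" by blast
  next
    fix x assume x: "x \<in> S"
    have hj: "h j \<in> S" if "j < m" for j using h that unfolding bij_betw_def by auto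
    have "(\<Sum>y\<in>S. M x y * f y) = (\<Sum>j<m. M x (h j) * f (h j))" by (rule reix)
    also have "\<dots> = (\<Sum>j<m. a (g x) j * v j)"
      by (rule sum.cong[OF refl]) (simp add: a_def f_def hg[OF x] hj gh)
    also have "\<dots> = \<mu> * v (g x)" using v2 hg[OF x] by simp
    also have "\<dots> = \<mu> * f x" using x unfolding f_def by simp
    finally show "(\<Sum>y\<in>S. M x y * f y) = \<mu> * f x" .
  qed
  thus "?E \<noteq> {}" by blast
qed

definition Mq :: "'a set set \<Rightarrow> nat \<Rightarrow> 'a set \<Rightarrow> 'a set \<Rightarrow> real" where
  "Mq K i F F' = (if F = F' then real (up_degree K i F) else if up_neighbors K i F F' then 1 else 0)"

lemma Mq_sym: "Mq K i F F' = Mq K i F' F"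
  unfolding Mq_def up_neighbors_def by (auto simp: Un_commute)

lemma lap_sum:
  assumes fin: "finite (faces K i)" and F: "F \<in> faces K i"
  shows "signless_up_laplacian K i f F = (\<Sum>F'\<in>faces K i. Mq K i F F' * f F')"
proof -
  let ?S = "faces K i"
  have sub: "{F'. up_neighbors K i F F'} \<subseteq> ?S - {F}" unfolding up_neighbors_def by auto
  have "(\<Sum>F'\<in>?S. Mq K i F F' * f F') = Mq K i F F * f F + (\<Sum>F'\<in>?S - {F}. Mq K i F F' * f F')"
    using sum.remove[OF fin F] by simp
  also have "(\<Sum>F'\<in>?S - {F}. Mq K i F F' * f F') = (\<Sum>F'\<in>?S - {F}. if up_neighbors K i F F' then f F' else 0)"
    by (rule sum.cong[OF refl]) (auto simp: Mq_def)
  also have "\<dots> = (\<Sum>F'\<in>{F'\<in>?S - {F}. up_neighbors K i F F'}. f F')"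
    by (simp add: sum.inter_filter[symmetric] fin)
  also have "{F'\<in>?S - {F}. up_neighbors K i F F'} = {F'. up_neighbors K i F F'}" using sub by auto
  finally show ?thesis unfolding signless_up_laplacian_def Mq_def by simp
qed

lemma eig_set_eq:
  assumes fin: "finite (faces K i)"
  shows "{\<mu>. is_eigenvalue_Qup K i \<mu>} = {\<mu>. \<exists>f. (\<forall>x. x \<notin> faces K i \<longrightarrow> f x = 0) \<and> (\<exists>x\<in>faces K i. f x \<noteq> 0) \<and>
           (\<forall>x\<in>faces K i. (\<Sum>y\<in>faces K i. Mq K i x y * f y) = \<mu> * f x)}"
  unfolding is_eigenvalue_Qup_def using lap_sum[OF fin] by simp

lemma q_up_props:
  assumes fin: "finite (faces K i)" and ne: "faces K i \<noteq> {}"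
  shows "is_eigenvalue_Qup K i (q_up K i)" and "\<And>\<mu>. is_eigenvalue_Qup K i \<mu> \<Longrightarrow> \<mu> \<le> q_up K i"
proof -
  have fE: "finite {\<mu>. is_eigenvalue_Qup K i \<mu>}" and nE: "{\<mu>. is_eigenvalue_Qup K i \<mu>} \<noteq> {}"
    unfolding eig_set_eq[OF fin] using set_eig(1)[OF fin ne, of "Mq K i", OF Mq_sym] set_eig(2)[OF fin ne, of "Mq K i", OF Mq_sym]
    by auto
  show "is_eigenvalue_Qup K i (q_up K i)" using Max_in[OF fE nE] unfolding q_up_def by simp
  show "\<And>\<mu>. is_eigenvalue_Qup K i \<mu> \<Longrightarrow> \<mu> \<le> q_up K i" using Max_ge[OF fE] unfolding q_up_def by simp
qed

locale cx =
  fixes V :: "'a set" and K :: "'a set set" and r :: nat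
  assumes sc: "simplicial_complex V K" and pure: "pure_dim K r" and r1: "r \<ge> 1"
begin

lemma finV: "finite V" using sc unfolding simplicial_complex_def by auto
lemma Ksub: "F \<in> K \<Longrightarrow> F \<subseteq> V" using sc unfolding simplicial_complex_def by auto
lemma down: "F \<in> K \<Longrightarrow> G \<subseteq> F \<Longrightarrow> G \<in> K" using sc unfolding simplicial_complex_def by auto
lemma single: "v \<in> V \<Longrightarrow> {v} \<in> K" using sc unfolding simplicial_complex_def by auto
lemma finK: "finite K"
proof (rule finite_subset)
  show "K \<subseteq> Pow V" using Ksub by auto
  show "finite (Pow V)" using finV by simp
qed
lemma finF: "F \<in> K \<Longrightarrow> finite F" using finite_subset[OF Ksub finV] .

lemma facet_above: assumes "F \<in> K" shows "\<exists>G\<in>K. F \<subseteq> G \<and> card G = r + 1"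
proof -
  let ?A = "{G\<in>K. F \<subseteq> G}"
  have fA: "finite ?A" using finK by auto
  have neA: "?A \<noteq> {}" using assms by auto
  have "Max (card ` ?A) \<in> card ` ?A" using fA neA by (intro Max_in) auto
  then obtain G where G: "G \<in> ?A" and GM: "card G = Max (card ` ?A)" by auto
  have Gm: "\<forall>G'\<in>?A. card G' \<le> card G" unfolding GM using fA by auto
  have "facet K G"
    unfolding facet_def
  proof (intro conjI notI)
    show "G \<in> K" using G by auto
    assume "\<exists>G'\<in>K. G \<subset> G'"
    then obtain G' where "G' \<in> K" "G \<subset> G'" by auto
    moreover hence "card G < card G'" using finF[of G'] by (intro psubset_card_mono) auto
    moreover have "G' \<in> ?A" using \<open>G' \<in> K\<close> \<open>G \<subset> G'\<close> G by auto
    ultimately show False using Gm by fastforce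
  qed
  hence "card G = r + 1" using pure unfolding pure_dim_def by auto
  thus ?thesis using G by auto
qed

lemma card_le: assumes "F \<in> K" shows "card F \<le> r + 1"
proof -
  obtain G where "G \<in> K" "F \<subseteq> G" "card G = r + 1" using facet_above[OF assms] by blast
  thus ?thesis using card_mono[OF finF[of G]] by auto
qed

lemma T_iff: "F \<in> faces K r \<longleftrightarrow> F \<in> K \<and> card F = r + 1" unfolding faces_def by auto
lemma S_iff: "G \<in> faces K (r - 1) \<longleftrightarrow> G \<in> K \<and> card G = r" unfolding faces_def using r1 by auto
lemma Tsub: "F \<in> faces K r \<Longrightarrow> F \<subseteq> V" using T_iff Ksub by auto
lemma finT: "finite (faces K r)" using finK unfolding faces_def by auto
lemma finS: "finite (faces K (r-1))" using finK unfolding faces_def by auto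

lemma T_ne: assumes "V \<noteq> {}" shows "faces K r \<noteq> {}"
proof -
  obtain v where "v \<in> V" using assms by auto
  hence "{v} \<in> K" by (rule single)
  then obtain G where "G \<in> K" "card G = r + 1" using facet_above by blast
  hence "G \<in> faces K r" using T_iff by simp
  thus ?thesis by auto
qed

lemma K_gen: "K = {G. \<exists>F\<in>faces K r. G \<subseteq> F}"
proof
  show "K \<subseteq> {G. \<exists>F\<in>faces K r. G \<subseteq> F}"
  proof
    fix G assume "G \<in> K"
    then obtain F where "F \<in> K" "G \<subseteq> F" "card F = r + 1" using facet_above by blast
    thus "G \<in> {G. \<exists>F\<in>faces K r. G \<subseteq> F}" using T_iff by auto
  qed
  show "{G. \<exists>F\<in>faces K r. G \<subseteq> F} \<subseteq> K" using down T_iff by auto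
qed

definition subr :: "'a set \<Rightarrow> 'a set set" where "subr F = {G. G \<subseteq> F \<and> card G = r}"
definition TG :: "'a set \<Rightarrow> 'a set set" where "TG G = {F \<in> faces K r. G \<subseteq> F}"

lemma subr_img: assumes "F \<in> faces K r" shows "subr F = (\<lambda>w. F - {w}) ` F"
proof -
  have fF: "finite F" and cF: "card F = r + 1" using assms T_iff finF by auto
  show ?thesis
  proof
    show "subr F \<subseteq> (\<lambda>w. F - {w}) ` F"
    proof
      fix G assume "G \<in> subr F"
      hence G: "G \<subseteq> F" "card G = r" unfolding subr_def by auto
      have "card (F - G) = 1" using G fF cF by (simp add: card_Diff_subset finite_subset)
      then obtain w where w: "F - G = {w}" using card_1_singletonE by blast
      hence "G = F - {w}" using G by auto
      moreover have "w \<in> F" using w by auto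
      ultimately show "G \<in> (\<lambda>w. F - {w}) ` F" by auto
    qed
    show "(\<lambda>w. F - {w}) ` F \<subseteq> subr F"
    proof
      fix G assume "G \<in> (\<lambda>w. F - {w}) ` F"
      then obtain w where "w \<in> F" "G = F - {w}" by auto
      thus "G \<in> subr F" unfolding subr_def using cF fF by (simp add: card_Diff_singleton)
    qed
  qed
qed

lemma subr_inj: "inj_on (\<lambda>w. F - {w}) F"
  by (rule inj_onI) (metis DiffD2 DiffI singletonD singletonI)

lemma sum_subr: assumes "F \<in> faces K r" shows "(\<Sum>G\<in>subr F. h G) = (\<Sum>w\<in>F. h (F - {w}))"
  unfolding subr_img[OF assms] using sum.reindex[OF subr_inj] by simp

lemma finTG: "finite (TG G)" unfolding TG_def using finT by auto

lemma up_deg: "up_degree K (r - 1) G = card (TG G)"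
  unfolding up_degree_def TG_def using r1 by simp

lemma two_sub_union:
  assumes "F \<in> faces K r" "G \<subseteq> F" "G' \<subseteq> F" "card G = r" "card G' = r" "G \<noteq> G'"
  shows "G \<union> G' = F"
proof -
  have fF: "finite F" and cF: "card F = r + 1" using assms T_iff finF by auto
  have "\<not> G' \<subseteq> G"
  proof
    assume "G' \<subseteq> G"
    hence "G' = G" using assms fF by (metis card_subset_eq finite_subset)
    thus False using assms by auto
  qed
  hence "G \<subset> G \<union> G'" by auto
  moreover have "finite (G \<union> G')" using fF assms by (auto intro: finite_subset)
  ultimately have "card G < card (G \<union> G')" by (intro psubset_card_mono) auto
  moreover have "card (G \<union> G') \<le> card F" using assms fF by (intro card_mono) auto
  ultimately have "card (G \<union> G') = card F" using assms cF by linarith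
  moreover have "G \<union> G' \<subseteq> F" using assms by auto
  ultimately show ?thesis using card_subset_eq[OF fF] by blast
qed

definition gsum :: "('a set \<Rightarrow> real) \<Rightarrow> 'a set \<Rightarrow> real" where
  "gsum f F = (\<Sum>G\<in>subr F. f G)"

lemma KI:
  assumes G: "G \<in> faces K (r - 1)"
  shows "signless_up_laplacian K (r - 1) f G = (\<Sum>F\<in>TG G. gsum f F)"
proof -
  have GK: "G \<in> K" and cG: "card G = r" using S_iff[THEN iffD1, OF G] by auto
  define A where "A F = subr F - {G}" for F
  define NB where "NB = {G'. up_neighbors K (r - 1) G G'}"
  have finsub: "finite (subr F)" if "F \<in> faces K r" for F
    using subr_img[OF that] finF T_iff that by auto
  have "(\<Sum>F\<in>TG G. gsum f F) = (\<Sum>F\<in>TG G. f G + (\<Sum>G'\<in>A F. f G'))"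
  proof (rule sum.cong[OF refl])
    fix F assume F: "F \<in> TG G"
    hence FT: "F \<in> faces K r" and "G \<subseteq> F" unfolding TG_def by auto
    hence "G \<in> subr F" unfolding subr_def using cG by auto
    thus "gsum f F = f G + (\<Sum>G'\<in>A F. f G')" unfolding gsum_def A_def
      using sum.remove[OF finsub[OF FT]] by simp
  qed
  also have "\<dots> = real (card (TG G)) * f G + (\<Sum>F\<in>TG G. \<Sum>G'\<in>A F. f G')"
    by (simp add: sum.distrib)
  also have "(\<Sum>F\<in>TG G. \<Sum>G'\<in>A F. f G') = (\<Sum>p\<in>Sigma (TG G) A. f (snd p))"
  proof -
    have "(\<Sum>F\<in>TG G. \<Sum>G'\<in>A F. f G') = (\<Sum>(F,G')\<in>Sigma (TG G) A. f G')"
      by (rule sum.Sigma) (use finTG finsub in \<open>auto simp: TG_def A_def\<close>)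
    thus ?thesis by (simp add: split_def)
  qed
  also have "\<dots> = (\<Sum>G'\<in>NB. f G')"
  proof (rule sum.reindex_bij_betw)
    show "bij_betw snd (Sigma (TG G) A) NB"
      unfolding bij_betw_def
    proof (intro conjI)
      show "inj_on snd (Sigma (TG G) A)"
      proof (rule inj_onI)
        fix p q assume p: "p \<in> Sigma (TG G) A" and q: "q \<in> Sigma (TG G) A" and e: "snd p = snd q"
        obtain F1 G1 where p': "p = (F1, G1)" by (cases p)
        obtain F2 G2 where q': "q = (F2, G2)" by (cases q)
        have "G \<union> G1 = F1" using p p' unfolding TG_def A_def subr_def
          by (intro two_sub_union) (use cG in auto)
        moreover have "G \<union> G2 = F2" using q q' unfolding TG_def A_def subr_def
          by (intro two_sub_union) (use cG in auto)
        ultimately show "p = q" using e p' q' by auto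
      qed
      show "snd ` Sigma (TG G) A = NB"
      proof
        show "snd ` Sigma (TG G) A \<subseteq> NB"
        proof
          fix G' assume "G' \<in> snd ` Sigma (TG G) A"
          then obtain F where F: "F \<in> TG G" "G' \<in> A F" by auto
          hence FT: "F \<in> faces K r" and GF: "G \<subseteq> F" and G'F: "G' \<subseteq> F" "card G' = r" "G' \<noteq> G"
            unfolding TG_def A_def subr_def by auto
          have U: "G \<union> G' = F" using two_sub_union[OF FT GF G'F(1) cG G'F(2)] G'F(3) by auto
          have "G' \<in> K" using FT G'F down T_iff by blast
          thus "G' \<in> NB" unfolding NB_def up_neighbors_def
            using G G'F U FT S_iff r1 by auto
        qed
        show "NB \<subseteq> snd ` Sigma (TG G) A"
        proof
          fix G' assume "G' \<in> NB"
          hence u: "G' \<in> faces K (r - 1)" "G \<noteq> G'" "G \<union> G' \<in> faces K r"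
            unfolding NB_def up_neighbors_def using r1 by auto
          have "(G \<union> G', G') \<in> Sigma (TG G) A"
            unfolding TG_def A_def subr_def using u S_iff by auto
          thus "G' \<in> snd ` Sigma (TG G) A" by force
        qed
      qed
    qed
  qed
  finally have "(\<Sum>F\<in>TG G. gsum f F) = real (card (TG G)) * f G + (\<Sum>G'\<in>NB. f G')" .
  thus ?thesis unfolding signless_up_laplacian_def NB_def up_deg by simp
qed

end

lemma card_ind: "finite A \<Longrightarrow> card {x\<in>A. P x} = (\<Sum>x\<in>A. if P x then 1 else (0::nat))"
  by (simp add: sum.If_cases Int_def conj_commute)

lemma real_c: assumes "n \<ge> r + 1" shows "real ((r + 1) + r * (n - (r + 1))) = real r * real n - real r ^ 2 + 1"
proof -
  obtain m where m: "n = m + (r + 1)" using assms le_Suc_ex by (metis add.commute)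
  show ?thesis unfolding m by (simp add: algebra_simps power2_eq_square)
qed

context cx
begin

definition Nd' :: "'a set \<Rightarrow> 'a \<Rightarrow> 'a set" where
  "Nd' F u = {w\<in>F. insert u (F - {w}) \<in> faces K r}"

definition Rsum :: "'a set \<Rightarrow> nat" where
  "Rsum F = (\<Sum>G\<in>subr F. card (TG G))"

lemma finFT: "F \<in> faces K r \<Longrightarrow> finite F" using T_iff finF by auto
lemma cardT: "F \<in> faces K r \<Longrightarrow> card F = r + 1" using T_iff by auto

lemma TG_split:
  assumes F: "F \<in> faces K r" and w: "w \<in> F"
  shows "card (TG (F - {w})) = 1 + card {u\<in>V - F. insert u (F - {w}) \<in> faces K r}"
proof -
  let ?U = "{u\<in>V - F. insert u (F - {w}) \<in> faces K r}"
  have fF: "finite F" and cF: "card F = r + 1" using F finFT cardT by auto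
  have eq: "TG (F - {w}) = insert F ((\<lambda>u. insert u (F - {w})) ` ?U)"
  proof
    show "TG (F - {w}) \<subseteq> insert F ((\<lambda>u. insert u (F - {w})) ` ?U)"
    proof
      fix F' assume "F' \<in> TG (F - {w})"
      hence F': "F' \<in> faces K r" "F - {w} \<subseteq> F'" unfolding TG_def by auto
      have fF': "finite F'" and cF': "card F' = r + 1" using F' finFT cardT by auto
      have "card (F' - (F - {w})) = 1"
        using F' fF' cF' cF fF w by (simp add: card_Diff_subset card_Diff_singleton finite_subset)
      then obtain u where u: "F' - (F - {w}) = {u}" using card_1_singletonE by blast
      hence F'eq: "F' = insert u (F - {w})" using F' by auto
      show "F' \<in> insert F ((\<lambda>u. insert u (F - {w})) ` ?U)"
      proof (cases "u = w")
        case True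
        hence "F' = F" using F'eq w by auto
        thus ?thesis by simp
      next
        case False
        hence "u \<notin> F" using u by auto
        moreover have "u \<in> V" using Tsub[OF F'(1)] u by auto
        ultimately have "u \<in> ?U" using F'eq F' by auto
        thus ?thesis using F'eq by auto
      qed
    qed
    show "insert F ((\<lambda>u. insert u (F - {w})) ` ?U) \<subseteq> TG (F - {w})"
      unfolding TG_def using F by auto
  qed
  have inj: "inj_on (\<lambda>u. insert u (F - {w})) ?U"
  proof (rule inj_onI)
    fix u1 u2 assume a: "u1 \<in> ?U" "u2 \<in> ?U" "insert u1 (F - {w}) = insert u2 (F - {w})"
    have "u1 \<in> insert u2 (F - {w})" using a(3) by blast
    moreover have "u1 \<notin> F" using a(1) by simp
    ultimately show "u1 = u2" by blast
  qed
  have notin: "F \<notin> (\<lambda>u. insert u (F - {w})) ` ?U"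
  proof
    assume "F \<in> (\<lambda>u. insert u (F - {w})) ` ?U"
    then obtain u where u: "u \<in> ?U" "F = insert u (F - {w})" by auto
    have "u \<in> F" using u(2) by blast
    thus False using u(1) by simp
  qed
  have finU: "finite ?U" using finV by auto
  show ?thesis unfolding eq using notin card_image[OF inj] finU by simp
qed

lemma R_eq:
  assumes F: "F \<in> faces K r"
  shows "Rsum F = (r + 1) + (\<Sum>u\<in>V - F. card (Nd' F u))"
proof -
  have fF: "finite F" and cF: "card F = r + 1" using F finFT cardT by auto
  have fVF: "finite (V - F)" using finV by auto
  have "Rsum F = (\<Sum>w\<in>F. card (TG (F - {w})))" unfolding Rsum_def using sum_subr[OF F, of "\<lambda>G. card (TG G)"] by simp
  also have "\<dots> = (\<Sum>w\<in>F. 1 + card {u\<in>V - F. insert u (F - {w}) \<in> faces K r})"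
    using TG_split[OF F] by simp
  also have "\<dots> = (\<Sum>w\<in>F. 1 + (\<Sum>u\<in>V - F. if insert u (F - {w}) \<in> faces K r then 1 else 0))"
    by (rule sum.cong[OF refl], rule arg_cong[where f="\<lambda>x. 1 + x"], rule card_ind[OF fVF])
  also have "\<dots> = card F + (\<Sum>w\<in>F. \<Sum>u\<in>V - F. if insert u (F - {w}) \<in> faces K r then 1 else 0)"
    by (simp only: sum.distrib card_eq_sum)
  also have "(\<Sum>w\<in>F. \<Sum>u\<in>V - F. if insert u (F - {w}) \<in> faces K r then 1 else (0::nat))
      = (\<Sum>u\<in>V - F. \<Sum>w\<in>F. if insert u (F - {w}) \<in> faces K r then 1 else 0)"
    by (rule sum.swap)
  also have "\<dots> = (\<Sum>u\<in>V - F. card (Nd' F u))"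
    unfolding Nd'_def by (rule sum.cong[OF refl], rule card_ind[OF fF, symmetric])
  finally show ?thesis using cF by simp
qed

lemma Nd_card:
  assumes F: "F \<in> faces K r" and u: "u \<notin> F"
  shows "card (N_d K r F u) = card (Nd' F u)"
proof -
  have eq: "N_d K r F u = (\<lambda>w. insert u (F - {w})) ` Nd' F u"
  proof
    show "N_d K r F u \<subseteq> (\<lambda>w. insert u (F - {w})) ` Nd' F u"
    proof
      fix H assume "H \<in> N_d K r F u"
      then obtain G where H: "H \<in> faces K r" "G \<subseteq> F" "card G = r" "H = G \<union> {u}"
        unfolding N_d_def by auto
      hence "G \<in> subr F" unfolding subr_def by auto
      then obtain w where w: "w \<in> F" "G = F - {w}" using subr_img[OF F] by auto
      hence "H = insert u (F - {w})" using H by auto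
      thus "H \<in> (\<lambda>w. insert u (F - {w})) ` Nd' F u" using H w unfolding Nd'_def by auto
    qed
    show "(\<lambda>w. insert u (F - {w})) ` Nd' F u \<subseteq> N_d K r F u"
    proof
      fix H assume "H \<in> (\<lambda>w. insert u (F - {w})) ` Nd' F u"
      then obtain w where w: "w \<in> F" "insert u (F - {w}) \<in> faces K r" "H = insert u (F - {w})"
        unfolding Nd'_def by auto
      have c: "F - {w} \<subseteq> F" "card (F - {w}) = r" using w finFT[OF F] cardT[OF F] by auto
      have "H = (F - {w}) \<union> {u}" using w by auto
      hence "\<exists>G. G \<subseteq> F \<and> card G = r \<and> H = G \<union> {u}" using c by blast
      moreover have "H \<in> faces K r" using w by simp
      ultimately show "H \<in> N_d K r F u" unfolding N_d_def by simp
    qed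
  qed
  have inj: "inj_on (\<lambda>w. insert u (F - {w})) (Nd' F u)"
  proof (rule inj_onI)
    fix w1 w2 assume a: "w1 \<in> Nd' F u" "w2 \<in> Nd' F u" "insert u (F - {w1}) = insert u (F - {w2})"
    have "F - {w1} = insert u (F - {w1}) - {u}" using u by auto
    also have "\<dots> = insert u (F - {w2}) - {u}" using a(3) by simp
    also have "\<dots> = F - {w2}" using u by auto
    finally have "F - {w1} = F - {w2}" .
    moreover have "w1 \<in> F" "w2 \<in> F" using a unfolding Nd'_def by auto
    ultimately show "w1 = w2" using inj_onD[OF subr_inj] by blast
  qed
  show ?thesis unfolding eq using card_image[OF inj] .
qed

lemma bad_exists:
  assumes df: "\<not> contains_copy K {1..r+2} (Delta_bd r)"
    and F: "F \<in> faces K r" and u: "u \<in> V - F"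
  shows "\<exists>w\<in>F. insert u (F - {w}) \<notin> faces K r"
proof (rule ccontr)
  assume "\<not> ?thesis"
  hence all: "\<forall>w\<in>F. insert u (F - {w}) \<in> faces K r" by auto
  define X where "X = insert u F"
  have fF: "finite F" and cF: "card F = r + 1" using F finFT cardT by auto
  have fX: "finite X" and cX: "card X = r + 2" unfolding X_def using fF cF u by auto
  have sub: "Y \<in> K" if "Y \<subseteq> X" "card Y = r + 1" for Y
  proof -
    have "card (X - Y) = 1" using that fX cX by (simp add: card_Diff_subset finite_subset)
    then obtain z where z: "X - Y = {z}" using card_1_singletonE by blast
    hence Yeq: "Y = X - {z}" using that by auto
    show ?thesis
    proof (cases "z = u")
      case True
      hence "Y = F" using Yeq u unfolding X_def by auto
      thus ?thesis using F T_iff by auto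
    next
      case False
      hence "z \<in> F" using z unfolding X_def by auto
      moreover have "Y = insert u (F - {z})" using Yeq False unfolding X_def by auto
      ultimately show ?thesis using all T_iff by auto
    qed
  qed
  obtain \<phi> where phi: "bij_betw \<phi> {1..card X} X" using ex_bij_betw_nat_finite_1[OF fX] by auto
  have "contains_copy K {1..r+2} (Delta_bd r)"
    unfolding contains_copy_def
  proof (rule exI[of _ \<phi>], intro conjI ballI)
    have injp: "inj_on \<phi> {1..r+2}" using phi cX unfolding bij_betw_def by simp
    show "inj_on \<phi> {1..r+2}" by (rule injp)
    fix F' assume "F' \<in> Delta_bd r"
    then obtain T' where T': "T' \<subseteq> {1..r+2}" "card T' = r + 1" "F' \<subseteq> T'"
      unfolding Delta_bd_def gen_complex_def by blast
    have "\<phi> ` T' \<subseteq> X" using phi T' cX unfolding bij_betw_def by auto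
    moreover have "card (\<phi> ` T') = r + 1"
      using card_image[OF inj_on_subset[OF injp T'(1)]] T'(2) by simp
    ultimately have "\<phi> ` T' \<in> K" by (rule sub)
    moreover have "\<phi> ` F' \<subseteq> \<phi> ` T'" by (rule image_mono[OF T'(3)])
    ultimately show "\<phi> ` F' \<in> K" by (rule down)
  qed
  thus False using df by simp
qed

lemma Nd_le:
  assumes df: "\<not> contains_copy K {1..r+2} (Delta_bd r)"
    and F: "F \<in> faces K r" and u: "u \<in> V - F"
  shows "card (Nd' F u) \<le> r"
proof -
  obtain w where w: "w \<in> F" "insert u (F - {w}) \<notin> faces K r" using bad_exists[OF df F u] by auto
  have "Nd' F u \<subseteq> F - {w}" using w unfolding Nd'_def by auto
  hence "card (Nd' F u) \<le> card (F - {w})" using finFT[OF F] by (intro card_mono) auto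
  also have "\<dots> = r" using w finFT[OF F] cardT[OF F] by simp
  finally show ?thesis .
qed

lemma R_le:
  assumes df: "\<not> contains_copy K {1..r+2} (Delta_bd r)" and n: "card V \<ge> r + 1"
    and F: "F \<in> faces K r"
  shows "Rsum F \<le> (r + 1) + r * (card V - (r + 1))"
proof -
  have "(\<Sum>u\<in>V - F. card (Nd' F u)) \<le> (\<Sum>u\<in>V - F. r)"
    using Nd_le[OF df F] by (intro sum_mono) auto
  also have "\<dots> = r * (card V - (r + 1))"
    using Tsub[OF F] finV cardT[OF F] finFT[OF F] by (simp add: card_Diff_subset)
  finally show ?thesis using R_eq[OF F] by simp
qed

lemma R_eq_cond:
  assumes df: "\<not> contains_copy K {1..r+2} (Delta_bd r)" and n: "card V \<ge> r + 1"
    and F: "F \<in> faces K r" and R: "Rsum F = (r + 1) + r * (card V - (r + 1))"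
  shows "\<forall>u\<in>V - F. card (Nd' F u) = r"
proof (rule ccontr)
  assume "\<not> ?thesis"
  then obtain u where u: "u \<in> V - F" "card (Nd' F u) \<noteq> r" by auto
  have "(\<Sum>u\<in>V - F. card (Nd' F u)) < (\<Sum>u\<in>V - F. r)"
  proof (rule sum_strict_mono_ex1)
    show "finite (V - F)" using finV by simp
    show "\<forall>x\<in>V - F. card (Nd' F x) \<le> r" using Nd_le[OF df F] by auto
    show "\<exists>a\<in>V - F. card (Nd' F a) < r" using u Nd_le[OF df F u(1)] by (intro bexI[of _ u]) auto
  qed
  also have "\<dots> = r * (card V - (r + 1))"
    using Tsub[OF F] finV cardT[OF F] finFT[OF F] by (simp add: card_Diff_subset)
  finally show False using R_eq[OF F] R by simp
qed

lemma cond_iff: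
  assumes F: "F \<in> faces K r" and u: "u \<notin> F"
  shows "card (Nd' F u) = r \<longleftrightarrow> (\<exists>!w. w \<in> F \<and> insert u (F - {w}) \<notin> faces K r)"
proof -
  define B where "B = {w\<in>F. insert u (F - {w}) \<notin> faces K r}"
  have fF: "finite F" and cF: "card F = r + 1" using F finFT cardT by auto
  have un: "Nd' F u \<union> B = F" and di: "Nd' F u \<inter> B = {}" unfolding Nd'_def B_def by auto
  have "card (Nd' F u) + card B = card F"
    using card_Un_disjoint[of "Nd' F u" B] un di fF by (metis finite_Un)
  hence "card (Nd' F u) = r \<longleftrightarrow> card B = 1" using cF by auto
  also have "\<dots> \<longleftrightarrow> (\<exists>x. B = {x})" using card_1_singleton_iff by simp
  also have "\<dots> \<longleftrightarrow> (\<exists>!w. w \<in> B)"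
  proof
    assume "\<exists>x. B = {x}"
    then obtain x where x: "B = {x}" by auto
    show "\<exists>!w. w \<in> B" unfolding x by auto
  next
    assume "\<exists>!w. w \<in> B"
    then obtain x where "x \<in> B" "\<forall>y. y \<in> B \<longrightarrow> y = x" by auto
    hence "B = {x}" by blast
    thus "\<exists>x. B = {x}" by blast
  qed
  finally show ?thesis unfolding B_def by simp
qed

end

context cx
begin

lemma spread:
  assumes MsT: "Ms \<subseteq> faces K r" and Msne: "Ms \<noteq> {}"
    and cl: "\<And>F F'. F \<in> Ms \<Longrightarrow> F' \<in> faces K r \<Longrightarrow> card (F \<inter> F') = r \<Longrightarrow> F' \<in> Ms"
    and cd: "\<And>F u. F \<in> Ms \<Longrightarrow> u \<in> V - F \<Longrightarrow> card (Nd' F u) = r"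
  shows "faces K r \<subseteq> Ms"
proof
  fix F' assume F'T: "F' \<in> faces K r"
  show "F' \<in> Ms"
  proof (rule ccontr)
    assume nF': "F' \<notin> Ms"
    have fMs: "finite Ms" using finite_subset[OF MsT finT] .
    have "Max ((\<lambda>F. card (F \<inter> F')) ` Ms) \<in> (\<lambda>F. card (F \<inter> F')) ` Ms"
      using fMs Msne by (intro Max_in) auto
    then obtain F where FM: "F \<in> Ms" and Fk: "card (F \<inter> F') = Max ((\<lambda>F. card (F \<inter> F')) ` Ms)"
      by auto
    have mx: "card (F2 \<inter> F') \<le> card (F \<inter> F')" if "F2 \<in> Ms" for F2
      unfolding Fk using fMs that by auto
    have FT: "F \<in> faces K r" using FM MsT by auto
    have fF: "finite F" and cF: "card F = r + 1" using FT finFT cardT by auto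
    have fF': "finite F'" and cF': "card F' = r + 1" using F'T finFT cardT by auto
    have neq: "F \<noteq> F'" using FM nF' by auto
    have ne_r: "card (F \<inter> F') \<noteq> r" using cl[OF FM F'T] nF' by auto
    have ne_r1: "card (F \<inter> F') \<noteq> r + 1"
    proof
      assume "card (F \<inter> F') = r + 1"
      hence "F \<inter> F' = F" using card_subset_eq[OF fF, of "F \<inter> F'"] cF by auto
      hence "F \<subseteq> F'" by auto
      hence "F = F'" using card_subset_eq[OF fF' \<open>F \<subseteq> F'\<close>] cF cF' by simp
      thus False using neq by simp
    qed
    have "card (F \<inter> F') \<le> r + 1" using card_mono[OF fF, of "F \<inter> F'"] cF by auto
    hence lt: "card (F \<inter> F') < r" using ne_r ne_r1 by auto
    have c1: "card (F - F') = r + 1 - card (F \<inter> F')" using card_Diff_subset_Int[of F F'] fF cF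
      by simp
    have c2: "card (F' - F) = r + 1 - card (F \<inter> F')" using card_Diff_subset_Int[of F' F] fF' cF'
      by (simp add: Int_commute)
    obtain u where u: "u \<in> F'" "u \<notin> F"
    proof -
      have "card (F' - F) > 0" using c2 lt by simp
      hence "F' - F \<noteq> {}" by (metis card.empty less_irrefl)
      thus ?thesis using that by auto
    qed
    have uV: "u \<in> V - F" using u Tsub[OF F'T] by auto
    have "card (Nd' F u) = r" using cd[OF FM uV] .
    hence uniq: "\<exists>!w. w \<in> F \<and> insert u (F - {w}) \<notin> faces K r" using cond_iff[OF FT u(2)] by simp
    have c3: "card (F - F') \<ge> 2" using c1 lt by simp
    obtain w1 where w1: "w1 \<in> F - F'" using c3 by (metis card.empty ex_in_conv not_numeral_le_zero)
    have "card (F - F' - {w1}) \<ge> 1" using c3 w1 fF by (simp add: card_Diff_singleton)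
    then obtain w2 where w2: "w2 \<in> F - F' - {w1}" by (metis card.empty ex_in_conv not_one_le_zero)
    obtain w where w: "w \<in> F - F'" "insert u (F - {w}) \<in> faces K r"
    proof (cases "insert u (F - {w1}) \<in> faces K r")
      case True thus ?thesis using that w1 by blast
    next
      case False
      have "insert u (F - {w2}) \<in> faces K r"
      proof (rule ccontr)
        assume "insert u (F - {w2}) \<notin> faces K r"
        hence "w1 = w2" using uniq False w1 w2 by auto
        thus False using w2 by auto
      qed
      thus ?thesis using that w2 by blast
    qed
    define F2 where "F2 = insert u (F - {w})"
    have F2T: "F2 \<in> faces K r" using w unfolding F2_def by simp
    have "F \<inter> F2 = F - {w}" unfolding F2_def using u w by auto
    hence "card (F \<inter> F2) = r" using w fF cF by (simp add: card_Diff_singleton)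
    hence F2M: "F2 \<in> Ms" using cl[OF FM F2T] by simp
    have "F2 \<inter> F' = insert u (F \<inter> F')" unfolding F2_def using u w by auto
    hence "card (F2 \<inter> F') = card (F \<inter> F') + 1" using u fF by simp
    thus False using mx[OF F2M] by simp
  qed
qed

definition cN :: nat where "cN = (r + 1) + r * (card V - (r + 1))"

lemma eig_bound:
  assumes df: "\<not> contains_copy K {1..r+2} (Delta_bd r)" and n: "card V \<ge> r + 1"
    and ev: "is_eigenvalue_Qup K (r - 1) \<mu>"
  shows "\<mu> \<le> real cN \<and> (\<mu> = real cN \<longrightarrow> (\<forall>F\<in>faces K r. \<forall>u\<in>V - F. card (Nd' F u) = r))"
proof -
  obtain f where f0: "\<forall>x. x \<notin> faces K (r - 1) \<longrightarrow> f x = 0"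
    and fne: "\<exists>G\<in>faces K (r - 1). f G \<noteq> 0"
    and feq: "\<forall>G\<in>faces K (r - 1). signless_up_laplacian K (r - 1) f G = \<mu> * f G"
    using ev unfolding is_eigenvalue_Qup_def by blast
  define g where "g F = gsum f F" for F
  have subS: "G \<in> faces K (r - 1)" if "F \<in> faces K r" "G \<in> subr F" for F G
  proof -
    have "G \<subseteq> F" "card G = r" using that unfolding subr_def by auto
    moreover have "F \<in> K" using that T_iff by auto
    ultimately show ?thesis using down S_iff by auto
  qed
  have finsub: "finite (subr F)" if "F \<in> faces K r" for F
    using subr_img[OF that] finFT[OF that] by simp
  have key: "\<mu> * g F = (\<Sum>G\<in>subr F. \<Sum>F'\<in>TG G. g F')" if F: "F \<in> faces K r" for F
  proof -
    have "\<mu> * g F = (\<Sum>G\<in>subr F. \<mu> * f G)" unfolding g_def gsum_def by (simp add: sum_distrib_left)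
    also have "\<dots> = (\<Sum>G\<in>subr F. signless_up_laplacian K (r - 1) f G)"
      using feq subS[OF F] by (intro sum.cong) auto
    also have "\<dots> = (\<Sum>G\<in>subr F. \<Sum>F'\<in>TG G. g F')"
      using KI subS[OF F] unfolding g_def by (intro sum.cong) auto
    finally show ?thesis .
  qed
  have TGT: "TG G \<subseteq> faces K r" for G unfolding TG_def by auto
  have cNpos: "real cN \<ge> 1" unfolding cN_def by simp
  show ?thesis
  proof (cases "\<forall>F\<in>faces K r. g F = 0")
    case True
    obtain G0 where G0: "G0 \<in> faces K (r - 1)" "f G0 \<noteq> 0" using fne by auto
    have "\<mu> * f G0 = signless_up_laplacian K (r - 1) f G0" using feq G0(1) by simp
    also have "\<dots> = (\<Sum>F\<in>TG G0. g F)" unfolding g_def by (rule KI[OF G0(1)])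
    also have "\<dots> = 0" using True TGT by (intro sum.neutral) auto
    finally have "\<mu> = 0" using G0 by simp
    thus ?thesis using cNpos by simp
  next
    case False
    then obtain F1 where F1: "F1 \<in> faces K r" "g F1 \<noteq> 0" by auto
    define Mx where "Mx = Max ((\<lambda>F. \<bar>g F\<bar>) ` faces K r)"
    have gle: "\<bar>g F\<bar> \<le> Mx" if "F \<in> faces K r" for F unfolding Mx_def using finT that by auto
    have gle': "\<bar>g F'\<bar> \<le> Mx" if "F' \<in> TG G" for F' G using gle that TGT by blast
    have Mxpos: "Mx > 0" using gle[OF F1(1)] F1(2) by simp
    have "Mx \<in> (\<lambda>F. \<bar>g F\<bar>) ` faces K r" unfolding Mx_def using finT F1 by (intro Max_in) auto
    then obtain F0 where F0: "F0 \<in> faces K r" "\<bar>g F0\<bar> = Mx" by auto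
    define SS where "SS F = (\<Sum>G\<in>subr F. \<Sum>F'\<in>TG G. \<bar>g F'\<bar>)" for F
    have ineq1: "\<bar>\<mu>\<bar> * \<bar>g F\<bar> \<le> SS F" if F: "F \<in> faces K r" for F
    proof -
      have "\<bar>\<mu>\<bar> * \<bar>g F\<bar> = \<bar>\<mu> * g F\<bar>" by (rule abs_mult[symmetric])
      also have "\<dots> = \<bar>\<Sum>G\<in>subr F. \<Sum>F'\<in>TG G. g F'\<bar>" using key[OF F] by (rule arg_cong)
      also have "\<dots> \<le> (\<Sum>G\<in>subr F. \<bar>\<Sum>F'\<in>TG G. g F'\<bar>)" by (rule sum_abs)
      also have "\<dots> \<le> SS F" unfolding SS_def by (intro sum_mono sum_abs)
      finally show ?thesis .
    qed
    have ineq2: "SS F \<le> Mx * real (Rsum F)" if F: "F \<in> faces K r" for F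
    proof -
      have "SS F \<le> (\<Sum>G\<in>subr F. \<Sum>F'\<in>TG G. Mx)" unfolding SS_def
        using gle TGT by (intro sum_mono) auto
      also have "\<dots> = Mx * real (Rsum F)" unfolding Rsum_def
        by (simp add: of_nat_sum sum_distrib_left mult.commute)
      finally show ?thesis .
    qed
    have Rle: "real (Rsum F) \<le> real cN" if "F \<in> faces K r" for F
    proof -
      have "Rsum F \<le> cN" using R_le[OF df n that] unfolding cN_def .
      thus ?thesis by (simp only: of_nat_le_iff)
    qed
    have "\<bar>\<mu>\<bar> * Mx \<le> Mx * real cN"
    proof -
      have "\<bar>\<mu>\<bar> * Mx \<le> Mx * real (Rsum F0)" using ineq1[OF F0(1)] ineq2[OF F0(1)] F0 by simp
      also have "\<dots> \<le> Mx * real cN" using Rle[OF F0(1)] Mxpos by simp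
      finally show ?thesis .
    qed
    hence mule: "\<bar>\<mu>\<bar> \<le> real cN" using Mxpos by (simp add: mult.commute)
    have "\<mu> = real cN \<longrightarrow> (\<forall>F\<in>faces K r. \<forall>u\<in>V - F. card (Nd' F u) = r)"
    proof
      assume mu: "\<mu> = real cN"
      define Ms where "Ms = {F \<in> faces K r. \<bar>g F\<bar> = Mx}"
      have eqs: "real (Rsum F) = real cN \<and> (\<forall>G\<in>subr F. \<forall>F'\<in>TG G. \<bar>g F'\<bar> = Mx)" if FM: "F \<in> Ms" for F
      proof -
        have FT: "F \<in> faces K r" and gF: "\<bar>g F\<bar> = Mx" using FM unfolding Ms_def by auto
        have a1: "real cN * Mx \<le> SS F" using ineq1[OF FT] gF mu by simp
        have a2: "SS F \<le> Mx * real (Rsum F)" by (rule ineq2[OF FT])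
        have a3: "Mx * real (Rsum F) \<le> Mx * real cN" using Rle[OF FT] Mxpos by simp
        have "Mx * real cN \<le> Mx * real (Rsum F)" using a1 a2 by (simp add: mult.commute)
        hence "real cN \<le> real (Rsum F)" using Mxpos by simp
        hence R: "real (Rsum F) = real cN" using Rle[OF FT] by linarith
        have "Mx * real (Rsum F) = Mx * real cN" using R by simp
        hence "SS F = Mx * real (Rsum F)" using a1 a2 mult.commute[of "real cN" Mx] by linarith
        hence "(\<Sum>G\<in>subr F. \<Sum>F'\<in>TG G. Mx - \<bar>g F'\<bar>) = 0"
          unfolding SS_def Rsum_def
          by (simp add: sum_subtractf of_nat_sum sum_distrib_left mult.commute)
        hence z: "\<forall>G\<in>subr F. (\<Sum>F'\<in>TG G. Mx - \<bar>g F'\<bar>) = 0"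
          using finsub[OF FT] gle'
          by (subst sum_nonneg_eq_0_iff[symmetric]) (auto intro!: sum_nonneg)
        have "\<forall>G\<in>subr F. \<forall>F'\<in>TG G. \<bar>g F'\<bar> = Mx"
        proof (intro ballI)
          fix G F' assume G: "G \<in> subr F" and F': "F' \<in> TG G"
          have "\<forall>F'\<in>TG G. Mx - \<bar>g F'\<bar> = 0"
            using z G finTG gle' by (subst sum_nonneg_eq_0_iff[symmetric]) auto
          thus "\<bar>g F'\<bar> = Mx" using F' by simp
        qed
        thus ?thesis using R by simp
      qed
      have "faces K r \<subseteq> Ms"
      proof (rule spread)
        show "Ms \<subseteq> faces K r" unfolding Ms_def by auto
        show "Ms \<noteq> {}" using F0 unfolding Ms_def by auto
        fix F F' assume FM: "F \<in> Ms" and F'T: "F' \<in> faces K r" and c: "card (F \<inter> F') = r"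
        have "F \<inter> F' \<in> subr F" unfolding subr_def using c by auto
        moreover have "F' \<in> TG (F \<inter> F')" unfolding TG_def using F'T by auto
        ultimately have "\<bar>g F'\<bar> = Mx" using eqs[OF FM] by blast
        thus "F' \<in> Ms" unfolding Ms_def using F'T by simp
      next
        fix F u assume FM: "F \<in> Ms" and u: "u \<in> V - F"
        have FT: "F \<in> faces K r" using FM unfolding Ms_def by auto
        have "Rsum F = cN" using eqs[OF FM] by simp
        thus "card (Nd' F u) = r" using R_eq_cond[OF df n FT] u unfolding cN_def by simp
      qed
      hence TM: "F \<in> Ms" if "F \<in> faces K r" for F using that by blast
      show "\<forall>F\<in>faces K r. \<forall>u\<in>V - F. card (Nd' F u) = r"
      proof (intro ballI)
        fix F u assume FT: "F \<in> faces K r" and u: "u \<in> V - F"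
        have "Rsum F = cN" using eqs[OF TM[OF FT]] by simp
        thus "card (Nd' F u) = r" using R_eq_cond[OF df n FT] u unfolding cN_def by simp
      qed
    qed
    thus ?thesis using mule by simp
  qed
qed

lemma c_eig:
  assumes cond: "\<forall>F\<in>faces K r. \<forall>u\<in>V - F. card (Nd' F u) = r" and Vne: "V \<noteq> {}"
  shows "is_eigenvalue_Qup K (r - 1) (real cN)"
proof -
  define f where "f G = (if G \<in> faces K (r - 1) then real (card (TG G)) else 0)" for G
  have subS: "G \<in> faces K (r - 1)" if "F \<in> faces K r" "G \<in> subr F" for F G
  proof -
    have "G \<subseteq> F" "card G = r" using that unfolding subr_def by auto
    moreover have "F \<in> K" using that T_iff by auto
    ultimately show ?thesis using down S_iff by auto
  qed
  have gF: "gsum f F = real cN" if F: "F \<in> faces K r" for F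
  proof -
    have "gsum f F = real (Rsum F)" unfolding gsum_def Rsum_def f_def using subS[OF F]
      by (simp add: of_nat_sum)
    also have "Rsum F = (r + 1) + (\<Sum>u\<in>V - F. r)" using R_eq[OF F] cond F by simp
    also have "\<dots> = cN" unfolding cN_def
      using Tsub[OF F] finV cardT[OF F] finFT[OF F] by (simp add: card_Diff_subset)
    finally show ?thesis .
  qed
  obtain F0 where F0: "F0 \<in> faces K r" using T_ne[OF Vne] by auto
  have "F0 \<noteq> {}" using cardT[OF F0] by auto
  then obtain w where w: "w \<in> F0" by auto
  have G0: "F0 - {w} \<in> faces K (r - 1)" using subS[OF F0] subr_img[OF F0] w by auto
  have "F0 \<in> TG (F0 - {w})" unfolding TG_def using F0 by auto
  hence "card (TG (F0 - {w})) > 0" using finTG by (auto simp: card_gt_0_iff)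
  hence fG0: "f (F0 - {w}) \<noteq> 0" unfolding f_def using G0 by simp
  show ?thesis unfolding is_eigenvalue_Qup_def
  proof (intro exI[of _ f] conjI ballI allI impI)
    show "x \<notin> faces K (r - 1) \<Longrightarrow> f x = 0" for x unfolding f_def by simp
    show "\<exists>G\<in>faces K (r - 1). f G \<noteq> 0" using G0 fG0 by blast
    fix G assume G: "G \<in> faces K (r - 1)"
    have "signless_up_laplacian K (r - 1) f G = (\<Sum>F\<in>TG G. gsum f F)" by (rule KI[OF G])
    also have "\<dots> = (\<Sum>F\<in>TG G. real cN)" using gF unfolding TG_def by (intro sum.cong) auto
    also have "\<dots> = real cN * f G" unfolding f_def using G by simp
    finally show "signless_up_laplacian K (r - 1) f G = real cN * f G" .
  qed
qed

end

lemma invol_even: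
  assumes "finite A" and "\<forall>x\<in>A. m x \<in> A \<and> m x \<noteq> x \<and> m (m x) = x"
  shows "even (card A)"
  using assms
proof (induction "card A" arbitrary: A rule: less_induct)
  case less
  show ?case
  proof (cases "A = {}")
    case True thus ?thesis by simp
  next
    case False
    then obtain x where x: "x \<in> A" by auto
    define A' where "A' = A - {x, m x}"
    have mx: "m x \<in> A" "m x \<noteq> x" using less.prems x by auto
    have c2: "card {x, m x} \<le> card A" using less.prems(1) x mx by (intro card_mono) auto
    have "card {x, m x} = 2" using mx by simp
    have cA: "card A = card A' + 2" unfolding A'_def using less.prems(1) x mx c2 \<open>card {x, m x} = 2\<close>
      by (simp add: card_Diff_subset)
    have "\<forall>y\<in>A'. m y \<in> A' \<and> m y \<noteq> y \<and> m (m y) = y"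
    proof
      fix y assume y: "y \<in> A'"
      hence yA: "y \<in> A" "y \<noteq> x" "y \<noteq> m x" unfolding A'_def by auto
      have p: "m y \<in> A" "m y \<noteq> y" "m (m y) = y" using less.prems(2) yA(1) by auto
      have "m y \<noteq> x"
      proof
        assume "m y = x" hence "m (m y) = m x" by simp
        thus False using p yA by simp
      qed
      moreover have "m y \<noteq> m x"
      proof
        assume "m y = m x" hence "m (m y) = m (m x)" by simp
        thus False using p yA less.prems(2) x by simp
      qed
      ultimately show "m y \<in> A' \<and> m y \<noteq> y \<and> m (m y) = y" unfolding A'_def using p by simp
    qed
    moreover have "card A' < card A" using cA by simp
    moreover have "finite A'" unfolding A'_def using less.prems(1) by simp
    ultimately have "even (card A')" using less.hyps by blast
    thus ?thesis using cA by simp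
  qed
qed

lemma sub_minus_one:
  assumes "finite B" "S \<subseteq> B" "card S + 1 = card B"
  shows "\<exists>z\<in>B. S = B - {z}"
proof -
  have "card (B - S) = 1" using assms by (simp add: card_Diff_subset finite_subset)
  then obtain z where z: "B - S = {z}" using card_1_singletonE by blast
  hence "z \<in> B" "S = B - {z}" using assms(2) by auto
  thus ?thesis by blast
qed

context cx
begin

definition condU :: bool where
  "condU = (\<forall>F\<in>faces K r. \<forall>u\<in>V - F. \<exists>!w. w \<in> F \<and> insert u (F - {w}) \<notin> faces K r)"

lemma condU_good:
  assumes cU: condU and F: "F \<in> faces K r" and u: "u \<in> V - F"
    and a: "a \<in> F" "insert u (F - {a}) \<notin> faces K r" and w: "w \<in> F" "w \<noteq> a"
  shows "insert u (F - {w}) \<in> faces K r"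
proof (rule ccontr)
  assume "insert u (F - {w}) \<notin> faces K r"
  moreover have "\<exists>!w. w \<in> F \<and> insert u (F - {w}) \<notin> faces K r" using cU F u unfolding condU_def by blast
  ultimately have "w = a" using a w by blast
  thus False using w by simp
qed

lemma condU_bad:
  assumes cU: condU and F: "F \<in> faces K r" and u: "u \<in> V - F"
  obtains a where "a \<in> F" "insert u (F - {a}) \<notin> faces K r"
  using cU F u unfolding condU_def by blast

lemma viol_facts:
  assumes cU: condU and E: "E \<in> faces K r" and x: "x \<in> V - E" and y: "y \<in> V - E" and xy: "x \<noteq> y"
    and a: "a \<in> E" and b: "b \<in> E" and ab: "a \<noteq> b"
    and xa: "insert x (E - {a}) \<notin> faces K r" and yb: "insert y (E - {b}) \<notin> faces K r"
  defines "Y \<equiv> insert x (insert y E)"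
  shows "\<And>z. z \<in> Y \<Longrightarrow> z \<noteq> a \<Longrightarrow> z \<noteq> y \<Longrightarrow> Y - {a, z} \<in> faces K r"
    and "\<And>z. z \<in> Y \<Longrightarrow> z \<noteq> a \<Longrightarrow> z \<noteq> y \<Longrightarrow> Y - {y, z} \<in> faces K r"
    and "\<And>z. z \<in> Y \<Longrightarrow> z \<noteq> b \<Longrightarrow> z \<noteq> x \<Longrightarrow> Y - {b, z} \<in> faces K r"
    and "\<And>z. z \<in> Y \<Longrightarrow> z \<noteq> b \<Longrightarrow> z \<noteq> x \<Longrightarrow> Y - {x, z} \<in> faces K r"
proof -
  have xE: "x \<notin> E" and yE: "y \<notin> E" using x y by auto
  have g1: "insert x (E - {w}) \<in> faces K r" if "w \<in> E" "w \<noteq> a" for w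
    by (rule condU_good[OF cU E x a(1) xa that])
  have g2: "insert y (E - {w}) \<in> faces K r" if "w \<in> E" "w \<noteq> b" for w
    by (rule condU_good[OF cU E y b yb that])
  define Fa where "Fa = insert y (E - {a})"
  have FaT: "Fa \<in> faces K r" unfolding Fa_def using g2 a ab by simp
  have xFa: "x \<in> V - Fa" unfolding Fa_def using x xy by auto
  have yFa: "y \<in> Fa" unfolding Fa_def by simp
  have "insert x (Fa - {y}) = insert x (E - {a})" unfolding Fa_def using yE by auto
  hence bad_a: "insert x (Fa - {y}) \<notin> faces K r" using xa by simp
  show "Y - {a, z} \<in> faces K r" if z: "z \<in> Y" "z \<noteq> a" "z \<noteq> y" for z
  proof (cases "z = x")
    case True
    have "Y - {a, z} = Fa" unfolding Y_def Fa_def True using xE xy xE yE xy a b ab by auto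
    thus ?thesis using FaT by simp
  next
    case False
    hence zFa: "z \<in> Fa" using z unfolding Y_def Fa_def xE yE xy a b ab by auto
    have "insert x (Fa - {z}) \<in> faces K r" by (rule condU_good[OF cU FaT xFa yFa bad_a zFa z(3)])
    moreover have "insert x (Fa - {z}) = Y - {a, z}" unfolding Y_def Fa_def using z False xE yE ab a xE yE xy a b ab by auto
    ultimately show ?thesis by simp
  qed
  show "Y - {y, z} \<in> faces K r" if z: "z \<in> Y" "z \<noteq> a" "z \<noteq> y" for z
  proof (cases "z = x")
    case True
    have "Y - {y, z} = E" unfolding Y_def True using xE yE xy xE yE xy a b ab by auto
    thus ?thesis using E by simp
  next
    case False
    hence zE: "z \<in> E" using z unfolding Y_def xE yE xy a b ab by auto
    have "Y - {y, z} = insert x (E - {z})" unfolding Y_def using False xy yE z xE yE xy a b ab by auto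
    thus ?thesis using g1[OF zE z(2)] by simp
  qed
  define Fb where "Fb = insert x (E - {b})"
  have FbT: "Fb \<in> faces K r" unfolding Fb_def using g1 b ab by simp
  have yFb: "y \<in> V - Fb" unfolding Fb_def using y xy by auto
  have xFb: "x \<in> Fb" unfolding Fb_def by simp
  have "insert y (Fb - {x}) = insert y (E - {b})" unfolding Fb_def using xE by auto
  hence bad_b: "insert y (Fb - {x}) \<notin> faces K r" using yb by simp
  show "Y - {b, z} \<in> faces K r" if z: "z \<in> Y" "z \<noteq> b" "z \<noteq> x" for z
  proof (cases "z = y")
    case True
    have "Y - {b, z} = Fb" unfolding Y_def Fb_def True using yE xy xE yE xy a b ab by auto
    thus ?thesis using FbT by simp
  next
    case False
    hence zFb: "z \<in> Fb" using z unfolding Y_def Fb_def xE yE xy a b ab by auto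
    have "insert y (Fb - {z}) \<in> faces K r" by (rule condU_good[OF cU FbT yFb xFb bad_b zFb z(3)])
    moreover have "insert y (Fb - {z}) = Y - {b, z}" unfolding Y_def Fb_def using z False xE yE ab b xy xE yE xy a b ab by auto
    ultimately show ?thesis by simp
  qed
  show "Y - {x, z} \<in> faces K r" if z: "z \<in> Y" "z \<noteq> b" "z \<noteq> x" for z
  proof (cases "z = y")
    case True
    have "Y - {x, z} = E" unfolding Y_def True using xE yE xy xE yE xy a b ab by auto
    thus ?thesis using E by simp
  next
    case False
    hence zE: "z \<in> E" using z unfolding Y_def xE yE xy a b ab by auto
    have "Y - {x, z} = insert y (E - {z})" unfolding Y_def using False xy xE z xE yE xy a b ab by auto
    thus ?thesis using g2[OF zE z(2)] by simp
  qed
qed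

end

context cx
begin

lemma viol_even:
  assumes cU: condU and E: "E \<in> faces K r" and x: "x \<in> V - E" and y: "y \<in> V - E" and xy: "x \<noteq> y"
    and a: "a \<in> E" and b: "b \<in> E" and ab: "a \<noteq> b"
    and xa: "insert x (E - {a}) \<notin> faces K r" and yb: "insert y (E - {b}) \<notin> faces K r"
    and ev: "even r"
  shows False
proof -
  define Y where "Y = insert x (insert y E)"
  note vf = viol_facts[OF cU E x y xy a b ab xa yb, folded Y_def]
  have xE: "x \<notin> E" and yE: "y \<notin> E" using x y by auto
  have fE: "finite E" and cE: "card E = r + 1" using E finFT cardT by auto
  define A where "A = E - {a, b}"
  have cA: "card A = r - 1"
  proof -
    have "card {a, b} = 2" using ab by simp
    thus ?thesis unfolding A_def using fE cE a b by (simp add: card_Diff_subset)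
  qed
  define N where "N w t \<longleftrightarrow> w \<in> Y \<and> t \<in> Y \<and> t \<noteq> w \<and> Y - {w, t} \<notin> faces K r" for w t
  have Nsym: "N w t \<Longrightarrow> N t w" for w t
  proof -
    assume "N w t"
    moreover have "Y - {w, t} = Y - {t, w}" by (simp add: insert_commute)
    ultimately show "N t w" unfolding N_def by auto
  qed
  have g2: "insert y (E - {w}) \<in> faces K r" if "w \<in> E" "w \<noteq> b" for w
    by (rule condU_good[OF cU E y b yb that])
  have uniq: "\<exists>!t. N w t" if w: "w \<in> A" for w
  proof -
    have wE: "w \<in> E" "w \<noteq> a" "w \<noteq> b" using w unfolding A_def by auto
    define Fw where "Fw = insert y (E - {w})"
    have FwT: "Fw \<in> faces K r" unfolding Fw_def using g2 wE by simp
    have xFw: "x \<in> V - Fw" unfolding Fw_def using x xy by auto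
    have eq: "N w t \<longleftrightarrow> t \<in> Fw \<and> insert x (Fw - {t}) \<notin> faces K r" for t
    proof
      assume Nt: "N w t"
      have "t \<noteq> x"
      proof
        assume "t = x"
        hence "Y - {w, t} = Fw" unfolding Y_def Fw_def using xE yE xy wE by auto
        thus False using Nt FwT unfolding N_def by simp
      qed
      hence tF: "t \<in> Fw" using Nt unfolding N_def Y_def Fw_def by auto
      have "insert x (Fw - {t}) = Y - {w, t}" unfolding Y_def Fw_def using tF \<open>t \<noteq> x\<close> xE yE xy wE
        unfolding Fw_def by auto
      thus "t \<in> Fw \<and> insert x (Fw - {t}) \<notin> faces K r" using Nt tF unfolding N_def by simp
    next
      assume t: "t \<in> Fw \<and> insert x (Fw - {t}) \<notin> faces K r"
      have tx: "t \<noteq> x" using t xFw by auto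
      have "insert x (Fw - {t}) = Y - {w, t}" unfolding Y_def Fw_def using t tx xE yE xy wE
        unfolding Fw_def by auto
      moreover have "t \<in> Y" "t \<noteq> w" "w \<in> Y" using t wE yE unfolding Y_def Fw_def by auto
      ultimately show "N w t" using t unfolding N_def by simp
    qed
    have "\<exists>!t. t \<in> Fw \<and> insert x (Fw - {t}) \<notin> faces K r" using cU FwT xFw unfolding condU_def by blast
    thus ?thesis using eq by simp
  qed
  have NA: "t \<in> A" if w: "w \<in> A" and Nt: "N w t" for w t
  proof -
    have wE: "w \<in> E" "w \<noteq> a" "w \<noteq> b" using w unfolding A_def by auto
    have wY: "w \<in> Y" using wE unfolding Y_def by simp
    have wx: "w \<noteq> x" "w \<noteq> y" using wE xE yE by auto
    have "t \<noteq> a"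
    proof
      assume "t = a"
      hence "Y - {w, t} = Y - {a, w}" by (simp add: insert_commute)
      thus False using vf(1)[OF wY wE(2) wx(2)] Nt unfolding N_def by simp
    qed
    moreover have "t \<noteq> b"
    proof
      assume "t = b"
      hence "Y - {w, t} = Y - {b, w}" by (simp add: insert_commute)
      thus False using vf(3)[OF wY wE(3) wx(1)] Nt unfolding N_def by simp
    qed
    moreover have "t \<noteq> y"
    proof
      assume "t = y"
      hence "Y - {w, t} = Y - {y, w}" by (simp add: insert_commute)
      thus False using vf(2)[OF wY wE(2) wx(2)] Nt unfolding N_def by simp
    qed
    moreover have "t \<noteq> x"
    proof
      assume "t = x"
      hence "Y - {w, t} = Y - {x, w}" by (simp add: insert_commute)
      thus False using vf(4)[OF wY wE(3) wx(1)] Nt unfolding N_def by simp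
    qed
    ultimately show "t \<in> A" using Nt unfolding N_def Y_def A_def by auto
  qed
  define m where "m w = (THE t. N w t)" for w
  have mN: "N w (m w)" if "w \<in> A" for w unfolding m_def using theI'[OF uniq[OF that]] .
  have "\<forall>w\<in>A. m w \<in> A \<and> m w \<noteq> w \<and> m (m w) = w"
  proof
    fix w assume w: "w \<in> A"
    have mA: "m w \<in> A" using NA[OF w mN[OF w]] .
    moreover have "m w \<noteq> w" using mN[OF w] unfolding N_def by simp
    moreover have "m (m w) = w"
    proof -
      have "N (m w) w" using Nsym[OF mN[OF w]] .
      thus ?thesis using uniq[OF mA] mN[OF mA] by auto
    qed
    ultimately show "m w \<in> A \<and> m w \<noteq> w \<and> m (m w) = w" by simp
  qed
  hence "even (card A)" using invol_even[of A m] fE unfolding A_def by simp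
  hence "even (r - 1)" using cA by simp
  thus False using ev r1 by simp
qed

lemma rhomb_copy:
  assumes fB: "finite B" and cB: "card B = r + 1" and pq: "p \<noteq> q" and pB: "p \<notin> B" and qB: "q \<notin> B"
    and all: "\<forall>z\<in>B. insert p (B - {z}) \<in> K \<and> insert q (B - {z}) \<in> K"
  shows "contains_copy K {1..r+3} (rhombic r)"
proof -
  obtain \<psi> where psi: "bij_betw \<psi> {1..r+1} B" using ex_bij_betw_nat_finite_1[OF fB] cB by auto
  have psiB: "\<psi> i \<in> B" if "i \<in> {1..r+1}" for i using psi that unfolding bij_betw_def by auto
  have psiinj: "inj_on \<psi> {1..r+1}" using psi unfolding bij_betw_def by simp
  define \<phi> where "\<phi> i = (if i = r + 2 then p else if i = r + 3 then q else \<psi> i)" for i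
  have phiB: "\<phi> i = \<psi> i" "\<phi> i \<in> B" if "i \<in> {1..r+1}" for i
    using that psiB[OF that] unfolding \<phi>_def by auto
  have phiPQ: "\<phi> i \<in> {p, q}" "i = r + 2 \<longleftrightarrow> \<phi> i = p" if "i \<in> {1..r+3}" "i \<notin> {1..r+1}" for i
  proof -
    have "i = r + 2 \<or> i = r + 3" using that by auto
    thus "\<phi> i \<in> {p, q}" "i = r + 2 \<longleftrightarrow> \<phi> i = p" unfolding \<phi>_def using pq by auto
  qed
  have phi_inj: "inj_on \<phi> {1..r+3}"
  proof (rule inj_onI)
    fix i j assume i: "i \<in> {1..r+3}" and j: "j \<in> {1..r+3}" and e: "\<phi> i = \<phi> j"
    show "i = j"
    proof (cases "i \<in> {1..r+1}")
      case iin: True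
      show ?thesis
      proof (cases "j \<in> {1..r+1}")
        case True
        thus ?thesis using e phiB iin inj_onD[OF psiinj] by metis
      next
        case False
        thus ?thesis using phiPQ[OF j False] phiB[OF iin] e pB qB by auto
      qed
    next
      case inot: False
      show ?thesis
      proof (cases "j \<in> {1..r+1}")
        case True
        thus ?thesis using phiPQ[OF i inot] phiB[OF True] e pB qB by auto
      next
        case False
        have "i = r + 2 \<or> i = r + 3" "j = r + 2 \<or> j = r + 3" using i j inot False by auto
        thus ?thesis using phiPQ[OF i inot] phiPQ[OF j False] e by auto
      qed
    qed
  qed
  show ?thesis unfolding contains_copy_def
  proof (rule exI[of _ \<phi>], intro conjI ballI)
    show "inj_on \<phi> {1..r+3}" by (rule phi_inj)
    fix F assume "F \<in> rhombic r"
    then obtain i S where iS: "i \<in> {r+2, r+3}" "S \<subseteq> {1..r+1}" "card S = r" "F \<subseteq> insert i S"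
      unfolding rhombic_def gen_complex_def by blast
    have img: "\<phi> ` insert i S = insert (\<phi> i) (\<psi> ` S)"
    proof -
      have "\<phi> ` S = \<psi> ` S" using iS(2) unfolding \<phi>_def by (intro image_cong) auto
      thus ?thesis by simp
    qed
    have "\<psi> ` S \<subseteq> B" using iS(2) psiB by auto
    moreover have "card (\<psi> ` S) + 1 = card B"
      using card_image[OF inj_on_subset[OF psiinj iS(2)]] iS(3) cB by simp
    ultimately obtain z where z: "z \<in> B" "\<psi> ` S = B - {z}" using sub_minus_one[OF fB] by blast
    have "\<phi> i = p \<or> \<phi> i = q" using iS(1) unfolding \<phi>_def by auto
    hence "\<phi> ` insert i S \<in> K" unfolding img using z all by auto
    moreover have "\<phi> ` F \<subseteq> \<phi> ` insert i S" by (rule image_mono[OF iS(4)])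
    ultimately show "\<phi> ` F \<in> K" by (rule down)
  qed
qed

lemma viol_rhomb:
  assumes cU: condU and E: "E \<in> faces K r" and x: "x \<in> V - E" and y: "y \<in> V - E" and xy: "x \<noteq> y"
    and a: "a \<in> E" and b: "b \<in> E" and ab: "a \<noteq> b"
    and xa: "insert x (E - {a}) \<notin> faces K r" and yb: "insert y (E - {b}) \<notin> faces K r"
  shows "contains_copy K {1..r+3} (rhombic r)"
proof -
  define Y where "Y = insert x (insert y E)"
  note vf = viol_facts[OF cU E x y xy a b ab xa yb, folded Y_def]
  have xE: "x \<notin> E" and yE: "y \<notin> E" using x y by auto
  have fE: "finite E" and cE: "card E = r + 1" using E finFT cardT by auto
  define B where "B = Y - {a, y}"
  have fY: "finite Y" and cY: "card Y = r + 3" unfolding Y_def using fE cE xE yE xy by auto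
  have aY: "a \<in> Y" and yY: "y \<in> Y" and ay: "a \<noteq> y" unfolding Y_def using a yE by auto
  have cB: "card B = r + 1"
  proof -
    have "card {a, y} = 2" using ay by simp
    thus ?thesis unfolding B_def using fY cY aY yY by (simp add: card_Diff_subset)
  qed
  show ?thesis
  proof (rule rhomb_copy[of B a y])
    show "finite B" unfolding B_def using fY by simp
    show "card B = r + 1" by (rule cB)
    show "a \<noteq> y" by (rule ay)
    show "a \<notin> B" "y \<notin> B" unfolding B_def by auto
    show "\<forall>z\<in>B. insert a (B - {z}) \<in> K \<and> insert y (B - {z}) \<in> K"
    proof
      fix z assume z: "z \<in> B"
      hence zY: "z \<in> Y" "z \<noteq> a" "z \<noteq> y" unfolding B_def by auto
      have "insert a (B - {z}) = Y - {y, z}" unfolding B_def using aY zY ay by auto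
      moreover have "insert y (B - {z}) = Y - {a, z}" unfolding B_def using yY zY ay by auto
      ultimately show "insert a (B - {z}) \<in> K \<and> insert y (B - {z}) \<in> K"
        using vf(1)[OF zY] vf(2)[OF zY] T_iff by auto
    qed
  qed
qed

end

context cx
begin

definition NV :: bool where
  "NV = (\<forall>E x y a b. E \<in> faces K r \<longrightarrow> x \<in> V - E \<longrightarrow> y \<in> V - E \<longrightarrow> x \<noteq> y \<longrightarrow> a \<in> E \<longrightarrow> b \<in> E
      \<longrightarrow> a \<noteq> b \<longrightarrow> insert x (E - {a}) \<notin> faces K r \<longrightarrow> insert y (E - {b}) \<notin> faces K r \<longrightarrow> False)"

definition Lp :: bool where
  "Lp = (\<forall>E\<in>faces K r. \<forall>x\<in>V - E. \<forall>y\<in>V - E. \<forall>w\<in>E.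
      (insert x (E - {w}) \<in> faces K r) = (insert y (E - {w}) \<in> faces K r))"

lemma L_from_NV:
  assumes cU: condU and nv: NV
  shows Lp
proof -
  have h: False if E: "E \<in> faces K r" and x: "x \<in> V - E" and y: "y \<in> V - E" and w: "w \<in> E"
    and gx: "insert x (E - {w}) \<in> faces K r" and by': "insert y (E - {w}) \<notin> faces K r" for E x y w
  proof -
    have xy: "x \<noteq> y" using gx by' by auto
    obtain a where a: "a \<in> E" "insert x (E - {a}) \<notin> faces K r" using condU_bad[OF cU E x] by blast
    have "a \<noteq> w" using a gx by auto
    thus False using nv E x y xy a w by' unfolding NV_def by blast
  qed
  show ?thesis unfolding Lp_def
  proof (intro ballI)
    fix E x y w assume "E \<in> faces K r" "x \<in> V - E" "y \<in> V - E" "w \<in> E"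
    thus "(insert x (E - {w}) \<in> faces K r) = (insert y (E - {w}) \<in> faces K r)"
      using h by blast
  qed
qed

lemma tent_from_L:
  assumes cU: condU and L: Lp and Vne: "V \<noteq> {}"
  shows "\<exists>a\<in>V. faces K r = {S. S \<subseteq> V \<and> card S = r + 1 \<and> a \<in> S}"
proof -
  obtain E0 where E0: "E0 \<in> faces K r" using T_ne[OF Vne] by auto
  have E0ne: "E0 \<noteq> {}" using cardT[OF E0] by auto
  define good where "good a E \<longleftrightarrow> E \<in> faces K r \<and> a \<in> E \<and> (\<forall>x\<in>V - E. insert x (E - {a}) \<notin> faces K r)" for a E
  obtain a where gE0: "good a E0"
  proof (cases "V - E0 = {}")
    case True
    obtain a where "a \<in> E0" using E0ne by auto
    thus ?thesis using that True E0 unfolding good_def by auto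
  next
    case False
    then obtain x0 where x0: "x0 \<in> V - E0" by auto
    obtain a where a: "a \<in> E0" "insert x0 (E0 - {a}) \<notin> faces K r" using condU_bad[OF cU E0 x0] by blast
    have "\<forall>x\<in>V - E0. insert x (E0 - {a}) \<notin> faces K r"
      using L E0 x0 a unfolding Lp_def by blast
    thus ?thesis using that a E0 unfolding good_def by auto
  qed
  have aV: "a \<in> V" using gE0 Tsub[OF E0] unfolding good_def by auto
  have claim1: "\<And>E S. good a E \<Longrightarrow> S \<subseteq> V \<Longrightarrow> card S = r + 1 \<Longrightarrow> a \<in> S \<Longrightarrow> card (S - E) = k \<Longrightarrow> S \<in> faces K r" for k
  proof (induction k)
    case 0
    have ET: "E \<in> faces K r" using 0 unfolding good_def by auto
    have fS: "finite S" using 0 finV finite_subset by blast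
    have "S - E = {}" using 0 fS by simp
    hence "S \<subseteq> E" by auto
    hence "S = E" using card_subset_eq[OF finFT[OF ET]] cardT[OF ET] 0 by simp
    thus ?case using ET by simp
  next
    case (Suc k)
    have ET: "E \<in> faces K r" and aE: "a \<in> E" and gd: "\<forall>x\<in>V - E. insert x (E - {a}) \<notin> faces K r"
      using Suc.prems unfolding good_def by auto
    have fE: "finite E" and cE: "card E = r + 1" using ET finFT cardT by auto
    have fS: "finite S" using Suc.prems finV finite_subset by blast
    have "S - E \<noteq> {}" using Suc.prems by (metis card.empty nat.distinct(1))
    then obtain x where xS: "x \<in> S" "x \<notin> E" by auto
    have "card (E - S) = card (S - E)"
      using card_Diff_subset_Int[of E S] card_Diff_subset_Int[of S E] fE fS cE Suc.prems(3)
      by (simp add: Int_commute)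
    hence "E - S \<noteq> {}" using Suc.prems by (metis card.empty nat.distinct(1))
    then obtain w where wE: "w \<in> E" "w \<notin> S" by auto
    have wa: "w \<noteq> a" using wE Suc.prems(4) by auto
    have xV: "x \<in> V - E" using xS Suc.prems(2) by auto
    define E' where "E' = insert x (E - {w})"
    have E'T: "E' \<in> faces K r" unfolding E'_def
      by (rule condU_good[OF cU ET xV aE gd[rule_format, OF xV] wE(1) wa])
    have aE': "a \<in> E'" unfolding E'_def using aE wa by simp
    have wV: "w \<in> V - E'" unfolding E'_def using wE Tsub[OF ET] xS by auto
    have "\<forall>y\<in>V - E'. insert y (E' - {a}) \<notin> faces K r"
    proof
      fix y assume y: "y \<in> V - E'"
      have "insert w (E' - {a}) = insert x (E - {a})" unfolding E'_def using wE wa xS aE by auto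
      hence nw: "insert w (E' - {a}) \<notin> faces K r" using gd xV by simp
      show "insert y (E' - {a}) \<notin> faces K r"
        using L E'T y wV aE' nw unfolding Lp_def by blast
    qed
    hence gE': "good a E'" unfolding good_def using E'T aE' by simp
    have "S - E' = (S - E) - {x}" unfolding E'_def using wE by auto
    hence "card (S - E') = k" using Suc.prems(5) xS by simp
    thus ?case using Suc.IH[OF gE' Suc.prems(2-4)] by simp
  qed
  have cl1: "S \<in> faces K r" if "S \<subseteq> V" "card S = r + 1" "a \<in> S" for S
    using claim1[OF gE0 that refl] .
  have cl2: "a \<in> S" if S: "S \<in> faces K r" for S
  proof (rule ccontr)
    assume aS: "a \<notin> S"
    hence au: "a \<in> V - S" using aV by simp
    obtain w where w: "w \<in> S" "insert a (S - {w}) \<notin> faces K r" using condU_bad[OF cU S au] by blast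
    have "insert a (S - {w}) \<subseteq> V" using Tsub[OF S] aV by auto
    moreover have "card (insert a (S - {w})) = r + 1" using aS w finFT[OF S] cardT[OF S] by simp
    ultimately have "insert a (S - {w}) \<in> faces K r" using cl1 by simp
    thus False using w by simp
  qed
  have "faces K r = {S. S \<subseteq> V \<and> card S = r + 1 \<and> a \<in> S}"
    using cl1 cl2 Tsub cardT by blast
  thus ?thesis using aV by blast
qed

lemma tent_condU:
  assumes tent: "faces K r = {S. S \<subseteq> V \<and> card S = r + 1 \<and> a \<in> S}"
  shows condU
  unfolding condU_def
proof (intro ballI)
  fix F u assume F: "F \<in> faces K r" and u: "u \<in> V - F"
  have FV: "F \<subseteq> V" and cF: "card F = r + 1" and aF: "a \<in> F" using F tent by auto
  have fF: "finite F" using FV finV finite_subset by blast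
  have ua: "u \<noteq> a" using u aF by auto
  show "\<exists>!w. w \<in> F \<and> insert u (F - {w}) \<notin> faces K r"
  proof (rule ex1I[of _ a])
    show "a \<in> F \<and> insert u (F - {a}) \<notin> faces K r" using aF ua tent by auto
    fix w assume w: "w \<in> F \<and> insert u (F - {w}) \<notin> faces K r"
    show "w = a"
    proof (rule ccontr)
      assume wa: "w \<noteq> a"
      have "insert u (F - {w}) \<subseteq> V" using FV u by auto
      moreover have "card (insert u (F - {w})) = r + 1" using w u fF cF by simp
      moreover have "a \<in> insert u (F - {w})" using aF wa by simp
      ultimately have "insert u (F - {w}) \<in> faces K r" using tent by simp
      thus False using w by simp
    qed
  qed
qed

end

lemma sub1_sub: "{1..n-1} \<subseteq> {1..(n::nat)}" by auto

lemma bij_apex: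
  assumes fV: "finite V" and a: "a \<in> V"
  shows "\<exists>\<phi>. bij_betw \<phi> V {1..card V} \<and> \<phi> a = card V"
proof -
  define n where "n = card V"
  have n1: "n \<ge> 1" unfolding n_def using fV a by (metis One_nat_def Suc_leI card_gt_0_iff empty_iff)
  have cVa: "card (V - {a}) = n - 1" unfolding n_def using fV a by simp
  obtain \<psi> where psi: "bij_betw \<psi> {1..n-1} (V - {a})"
    using ex_bij_betw_nat_finite_1[of "V - {a}"] fV cVa by auto
  define \<theta> where "\<theta> i = (if i = n then a else \<psi> i)" for i
  have eqI: "{1..n} = insert n {1..n-1}" using n1 by auto
  have th1: "\<theta> ` {1..n-1} = V - {a}"
  proof -
    have "\<theta> ` {1..n-1} = \<psi> ` {1..n-1}" unfolding \<theta>_def using n1 by (intro image_cong) auto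
    thus ?thesis using psi unfolding bij_betw_def by simp
  qed
  have inj1: "inj_on \<theta> {1..n-1}"
  proof -
    have "inj_on \<psi> {1..n-1}" using psi unfolding bij_betw_def by simp
    moreover have eq: "\<theta> i = \<psi> i" if "i \<in> {1..n-1}" for i
    proof -
      have "i \<le> n - 1" using that by simp
      hence "i \<noteq> n" using n1 by linarith
      thus ?thesis unfolding \<theta>_def by simp
    qed
    have "inj_on \<theta> {1..n-1} = inj_on \<psi> {1..n-1}" by (rule inj_on_cong[OF eq])
    ultimately show ?thesis by simp
  qed
  have thn: "\<theta> n = a" unfolding \<theta>_def by simp
  have bth: "bij_betw \<theta> {1..n} V"
    unfolding bij_betw_def
  proof
    show "inj_on \<theta> {1..n}" unfolding eqI using inj1 th1 thn by auto
    show "\<theta> ` {1..n} = V" unfolding eqI using th1 thn a by auto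
  qed
  define \<phi> where "\<phi> = inv_into {1..n} \<theta>"
  have "bij_betw \<phi> V {1..n}" unfolding \<phi>_def by (rule bij_betw_inv_into[OF bth])
  moreover have "\<phi> a = n" unfolding \<phi>_def using bij_betw_inv_into_left[OF bth, of n] thn n1 by simp
  ultimately show ?thesis unfolding n_def by blast
qed

lemma tented_card:
  assumes n1: "n \<ge> 1" and cX: "card X = r + 1"
  shows "X \<in> tented n r \<longleftrightarrow> X \<subseteq> {1..n} \<and> n \<in> X"
proof
  assume "X \<in> tented n r"
  then obtain F where F: "F \<subseteq> {1..n-1}" "card F = r" "X \<subseteq> insert n F"
    unfolding tented_def gen_complex_def by blast
  have fF: "finite F" using F(1) finite_subset by blast
  have nF: "n \<notin> F"
  proof
    assume "n \<in> F" hence "n \<le> n - 1" using F(1) by auto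
    thus False using n1 by linarith
  qed
  have "card (insert n F) = r + 1" using fF nF F(2) by simp
  hence "X = insert n F" using card_subset_eq[of "insert n F" X] fF F(3) cX by simp
  moreover have "F \<subseteq> {1..n}"
  proof
    fix x assume "x \<in> F" hence "x \<in> {1..n-1}" using F(1) by blast
    hence "1 \<le> x" "x \<le> n - 1" by simp_all
    hence "1 \<le> x" "x \<le> n" by linarith+
    thus "x \<in> {1..n}" by simp
  qed
  ultimately show "X \<subseteq> {1..n} \<and> n \<in> X" using n1 by auto
next
  assume X: "X \<subseteq> {1..n} \<and> n \<in> X"
  have fX: "finite X" using X finite_subset by blast
  define F where "F = X - {n}"
  have "F \<subseteq> {1..n-1}" unfolding F_def using X by auto
  moreover have "card F = r" unfolding F_def using X fX cX by simp
  moreover have "X = insert n F" unfolding F_def using X by auto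
  ultimately show "X \<in> tented n r" unfolding tented_def gen_complex_def by blast
qed

context cx
begin

lemma tent_iso:
  assumes tent: "faces K r = {S. S \<subseteq> V \<and> card S = r + 1 \<and> a \<in> S}" and aV: "a \<in> V"
  shows "isomorphic V K {1..card V} (tented (card V) r)"
proof -
  define n where "n = card V"
  obtain \<phi> where phi: "bij_betw \<phi> V {1..n}" and pa: "\<phi> a = n" using bij_apex[OF finV aV] unfolding n_def by blast
  have n1: "n \<ge> 1" unfolding n_def using finV aV by (metis One_nat_def Suc_leI card_gt_0_iff empty_iff)
  have injV: "inj_on \<phi> V" using phi unfolding bij_betw_def by simp
  have imV: "\<phi> ` V = {1..n}" using phi unfolding bij_betw_def by simp
  define Tn where "Tn = {insert n F | F. F \<subseteq> {1..n-1} \<and> card F = r}"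
  have TT: "(\<lambda>F. \<phi> ` F) ` faces K r = Tn"
  proof
    show "(\<lambda>F. \<phi> ` F) ` faces K r \<subseteq> Tn"
    proof
      fix X assume "X \<in> (\<lambda>F. \<phi> ` F) ` faces K r"
      then obtain F where F: "F \<in> faces K r" "X = \<phi> ` F" by auto
      have FV: "F \<subseteq> V" and cF: "card F = r + 1" and aF: "a \<in> F" using F tent by auto
      have fF: "finite F" using FV finV finite_subset by blast
      have "X = insert n (\<phi> ` (F - {a}))" using F aF pa by auto
      moreover have "\<phi> ` (F - {a}) \<subseteq> {1..n-1}"
      proof
        fix i assume "i \<in> \<phi> ` (F - {a})"
        then obtain v where v: "v \<in> F" "v \<noteq> a" "i = \<phi> v" by auto
        have "v \<in> V" using v FV by blast
        hence "\<phi> v \<in> \<phi> ` V" by blast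
        hence "i \<in> {1..n}" using imV v by simp
        moreover have "i \<noteq> n" using v pa injV FV aV unfolding inj_on_def by auto
        ultimately show "i \<in> {1..n-1}" by auto
      qed
      moreover have "card (\<phi> ` (F - {a})) = r"
        using card_image[OF inj_on_subset[OF injV, of "F - {a}"]] FV fF cF aF by auto
      ultimately show "X \<in> Tn" unfolding Tn_def by blast
    qed
    show "Tn \<subseteq> (\<lambda>F. \<phi> ` F) ` faces K r"
    proof
      fix X assume "X \<in> Tn"
      then obtain F'' where F'': "F'' \<subseteq> {1..n-1}" "card F'' = r" "X = insert n F''" unfolding Tn_def by blast
      define F0 where "F0 = inv_into V \<phi> ` F''"
      have F''n: "F'' \<subseteq> {1..n}" using F''(1) sub1_sub by blast
      have F''im: "F'' \<subseteq> \<phi> ` V" using F''n imV by simp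
      have F0V: "F0 \<subseteq> V"
      proof
        fix v assume "v \<in> F0"
        then obtain i where i: "i \<in> F''" "v = inv_into V \<phi> i" unfolding F0_def by blast
        have "i \<in> \<phi> ` V" using i(1) F''im by blast
        thus "v \<in> V" using i(2) inv_into_into by metis
      qed
      have imF0: "\<phi> ` F0 = F''"
      proof -
        have "\<phi> ` F0 = (\<lambda>i. \<phi> (inv_into V \<phi> i)) ` F''" unfolding F0_def by (simp add: image_image)
        also have "\<dots> = (\<lambda>i. i) ` F''"
        proof (rule image_cong[OF refl])
          fix i assume "i \<in> F''" hence "i \<in> {1..n}" using F''n by blast
          thus "\<phi> (inv_into V \<phi> i) = i" by (rule bij_betw_inv_into_right[OF phi])
        qed
        finally show ?thesis by simp
      qed
      have aF0: "a \<notin> F0"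
      proof
        assume "a \<in> F0" hence "n \<in> F''" using imF0 pa by force
        hence "n \<in> {1..n-1}" using F''(1) by blast
        hence "n \<le> n - 1" by simp
        thus False using n1 by linarith
      qed
      have fF0: "finite F0" using F0V finV finite_subset by blast
      have cF0: "card F0 = r" using card_image[OF inj_on_subset[OF injV F0V]] imF0 F'' by simp
      have "insert a F0 \<in> faces K r" using tent F0V aV aF0 fF0 cF0 by simp
      moreover have "\<phi> ` insert a F0 = X" using imF0 pa F'' by simp
      ultimately show "X \<in> (\<lambda>F. \<phi> ` F) ` faces K r" by blast
    qed
  qed
  have "(\<lambda>F. \<phi> ` F) ` K = tented n r"
  proof
    show "(\<lambda>F. \<phi> ` F) ` K \<subseteq> tented n r"
    proof
      fix X assume "X \<in> (\<lambda>F. \<phi> ` F) ` K"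
      then obtain G where G: "G \<in> K" "X = \<phi> ` G" by auto
      then obtain F where F: "F \<in> faces K r" "G \<subseteq> F" using K_gen by blast
      have "\<phi> ` F \<in> Tn" using TT F by blast
      moreover have "X \<subseteq> \<phi> ` F" using G F by auto
      ultimately show "X \<in> tented n r" unfolding tented_def gen_complex_def Tn_def by blast
    qed
    show "tented n r \<subseteq> (\<lambda>F. \<phi> ` F) ` K"
    proof
      fix X assume "X \<in> tented n r"
      then obtain X' where X': "X' \<in> Tn" "X \<subseteq> X'" unfolding tented_def gen_complex_def Tn_def by blast
      then obtain F where F: "F \<in> faces K r" "X' = \<phi> ` F" using TT by blast
      define G where "G = {v \<in> F. \<phi> v \<in> X}"
      have "\<phi> ` G = X" unfolding G_def using X' F by auto
      moreover have "G \<in> K" unfolding G_def using F T_iff down[of F] by auto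
      ultimately show "X \<in> (\<lambda>F. \<phi> ` F) ` K" by blast
    qed
  qed
  thus ?thesis unfolding isomorphic_def n_def using phi n_def by blast
qed

lemma iso_tent:
  assumes iso: "isomorphic V K {1..card V} (tented (card V) r)" and Vne: "V \<noteq> {}"
  shows "\<exists>a\<in>V. faces K r = {S. S \<subseteq> V \<and> card S = r + 1 \<and> a \<in> S}"
proof -
  define n where "n = card V"
  obtain \<phi> where phi: "bij_betw \<phi> V {1..n}" and im: "(\<lambda>F. \<phi> ` F) ` K = tented n r"
    using iso unfolding isomorphic_def n_def by blast
  have n1: "n \<ge> 1" unfolding n_def using finV Vne by (simp add: Suc_leI card_gt_0_iff)
  have injV: "inj_on \<phi> V" using phi unfolding bij_betw_def by simp
  have imV: "\<phi> ` V = {1..n}" using phi unfolding bij_betw_def by simp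
  define a where "a = inv_into V \<phi> n"
  have aV: "a \<in> V" unfolding a_def using n1 imV by (auto intro: inv_into_into)
  have pa: "\<phi> a = n" unfolding a_def using bij_betw_inv_into_right[OF phi] n1 by auto
  have Kiff: "S \<in> K \<longleftrightarrow> \<phi> ` S \<in> tented n r" if SV: "S \<subseteq> V" for S
  proof
    assume "S \<in> K" thus "\<phi> ` S \<in> tented n r" using im by blast
  next
    assume "\<phi> ` S \<in> tented n r"
    then obtain G where G: "G \<in> K" "\<phi> ` S = \<phi> ` G" using im by (metis imageE)
    have "S = G" using inj_on_image_eq_iff[OF injV SV Ksub[OF G(1)]] G by simp
    thus "S \<in> K" using G by simp
  qed
  have "faces K r = {S. S \<subseteq> V \<and> card S = r + 1 \<and> a \<in> S}"
  proof (intro Set.set_eqI iffI)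
    fix S assume S: "S \<in> faces K r"
    have SV: "S \<subseteq> V" using Tsub[OF S] .
    have cS: "card S = r + 1" using cardT[OF S] .
    have c': "card (\<phi> ` S) = r + 1" using card_image[OF inj_on_subset[OF injV SV]] cS by simp
    have "\<phi> ` S \<in> tented n r" using Kiff[OF SV] S T_iff by auto
    hence "n \<in> \<phi> ` S" using tented_card[OF n1 c'] by simp
    then obtain v where "v \<in> S" "\<phi> v = n" by auto
    hence "v = a" using pa injV SV aV unfolding inj_on_def by auto
    thus "S \<in> {S. S \<subseteq> V \<and> card S = r + 1 \<and> a \<in> S}" using SV cS \<open>v \<in> S\<close> by simp
  next
    fix S assume "S \<in> {S. S \<subseteq> V \<and> card S = r + 1 \<and> a \<in> S}"
    hence SV: "S \<subseteq> V" and cS: "card S = r + 1" and aS: "a \<in> S" by auto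
    have c': "card (\<phi> ` S) = r + 1" using card_image[OF inj_on_subset[OF injV SV]] cS by simp
    have "\<phi> ` S \<subseteq> {1..n}" using imV SV by auto
    moreover have "n \<in> \<phi> ` S" using aS pa by force
    ultimately have "\<phi> ` S \<in> tented n r" using tented_card[OF n1 c'] by simp
    hence "S \<in> K" using Kiff[OF SV] by simp
    thus "S \<in> faces K r" using T_iff cS by simp
  qed
  thus ?thesis using aV by blast
qed

end

context cx
begin

lemma edge2: assumes "r = 1" "F \<in> faces K r" shows "\<exists>x y. x \<noteq> y \<and> F = {x, y}"
proof -
  have "card F = 2" using cardT[OF assms(2)] assms(1) by simp
  thus ?thesis using card_2_iff by metis
qed

lemma pair_T: assumes "r = 1" "{x, y} \<in> faces K r" shows "x \<noteq> y"
proof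
  assume "x = y" hence "card {x, y} = 1" by simp
  thus False using cardT[OF assms(2)] assms(1) by simp
qed

lemma xor1:
  assumes r: "r = 1" and cU: condU and pq: "{p, q} \<in> faces K r" and u: "u \<in> V" "u \<noteq> p" "u \<noteq> q"
  shows "{u, p} \<in> faces K r \<longleftrightarrow> {u, q} \<notin> faces K r"
proof -
  have pnq: "p \<noteq> q" using pair_T[OF r pq] .
  have uF: "u \<in> V - {p, q}" using u by simp
  have ex: "\<exists>!w. w \<in> {p, q} \<and> insert u ({p, q} - {w}) \<notin> faces K r"
    using bspec[OF bspec[OF cU[unfolded condU_def] pq] uF] .
  have e1: "insert u ({p, q} - {p}) = {u, q}" using pnq by auto
  have e2: "insert u ({p, q} - {q}) = {u, p}" using pnq by auto
  show ?thesis
  proof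
    assume up: "{u, p} \<in> faces K r"
    show "{u, q} \<notin> faces K r"
    proof
      assume uq: "{u, q} \<in> faces K r"
      from ex obtain w where "w \<in> {p, q}" "insert u ({p, q} - {w}) \<notin> faces K r" by blast
      thus False using up uq e1 e2 by auto
    qed
  next
    assume uq: "{u, q} \<notin> faces K r"
    show "{u, p} \<in> faces K r"
    proof (rule ccontr)
      assume up: "{u, p} \<notin> faces K r"
      have "p \<in> {p, q} \<and> insert u ({p, q} - {p}) \<notin> faces K r" using uq e1 by simp
      moreover have "q \<in> {p, q} \<and> insert u ({p, q} - {q}) \<notin> faces K r" using up e2 by simp
      ultimately have "p = q" using ex by blast
      thus False using pnq by simp
    qed
  qed
qed

lemma bip_iff:
  assumes r: "r = 1" and Vne: "V \<noteq> {}"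
  shows "condU \<longleftrightarrow> complete_bipartite V K"
proof
  assume cU: condU
  obtain E0 where E0: "E0 \<in> faces K r" using T_ne[OF Vne] by auto
  obtain a b where ab: "a \<noteq> b" "E0 = {a, b}" using edge2[OF r E0] by blast
  have abT: "{a, b} \<in> faces K r" using E0 ab by simp
  have baT: "{b, a} \<in> faces K r" using abT by (simp add: insert_commute)
  have aV: "a \<in> V" and bV: "b \<in> V" using Tsub[OF abT] by auto
  define A where "A = {v\<in>V. {v, b} \<in> faces K r}"
  define B where "B = {v\<in>V. {v, a} \<in> faces K r}"
  have aA: "a \<in> A" unfolding A_def using aV abT by simp
  have bB: "b \<in> B" unfolding B_def using bV baT by simp
  have disj: "A \<inter> B = {}"
  proof (rule ccontr)
    assume "A \<inter> B \<noteq> {}"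
    then obtain v where vA: "v \<in> A" and vB: "v \<in> B" by auto
    have vb: "{v, b} \<in> faces K r" and va: "{v, a} \<in> faces K r" and vV: "v \<in> V"
      using vA vB unfolding A_def B_def by auto
    have "v \<noteq> a" using pair_T[OF r va] by simp
    moreover have "v \<noteq> b" using pair_T[OF r vb] by simp
    ultimately have "{v, a} \<in> faces K r \<longleftrightarrow> {v, b} \<notin> faces K r" using xor1[OF r cU abT vV] by simp
    thus False using va vb by simp
  qed
  have cover: "A \<union> B = V"
  proof
    show "A \<union> B \<subseteq> V" unfolding A_def B_def by auto
    show "V \<subseteq> A \<union> B"
    proof
      fix v assume vV: "v \<in> V"
      show "v \<in> A \<union> B"
      proof (cases "v = a \<or> v = b")
        case True thus ?thesis using aA bB by auto
      next
        case False
        hence "{v, a} \<in> faces K r \<longleftrightarrow> {v, b} \<notin> faces K r" using xor1[OF r cU abT vV] by simp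
        thus ?thesis unfolding A_def B_def using vV by auto
      qed
    qed
  qed
  have AB_T: "{x, y} \<in> faces K r" if x: "x \<in> A" and y: "y \<in> B" for x y
  proof (cases "x = a")
    case True
    have "{y, a} \<in> faces K r" using y unfolding B_def by simp
    thus ?thesis using True by (simp add: insert_commute)
  next
    case xa: False
    show ?thesis
    proof (cases "y = b")
      case True thus ?thesis using x unfolding A_def by simp
    next
      case yb: False
      have xb: "{x, b} \<in> faces K r" and xV: "x \<in> V" using x unfolding A_def by auto
      have yV: "y \<in> V" using y unfolding B_def by auto
      have xy: "y \<noteq> x" using x y disj by auto
      have ynA: "y \<notin> A" using y disj by auto
      hence "{y, b} \<notin> faces K r" unfolding A_def using yV by simp
      moreover have "{y, x} \<in> faces K r \<longleftrightarrow> {y, b} \<notin> faces K r" using xor1[OF r cU xb yV xy yb] .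
      ultimately show ?thesis by (simp add: insert_commute)
    qed
  qed
  have T_AB: "\<exists>x y. F = {x, y} \<and> x \<in> A \<and> y \<in> B" if F: "F \<in> faces K r" for F
  proof -
    obtain x y where xy: "x \<noteq> y" "F = {x, y}" using edge2[OF r F] by blast
    have xyT: "{x, y} \<in> faces K r" using F xy by simp
    have xV: "x \<in> V" and yV: "y \<in> V" using Tsub[OF F] xy by auto
    have notAA: False if "x \<in> A" "y \<in> A"
    proof -
      have "x \<noteq> b" "y \<noteq> b" using that bB disj by auto
      hence "{b, x} \<in> faces K r \<longleftrightarrow> {b, y} \<notin> faces K r" using xor1[OF r cU xyT bV] by simp
      moreover have "{x, b} \<in> faces K r" "{y, b} \<in> faces K r" using that unfolding A_def by auto
      ultimately show False by (simp add: insert_commute)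
    qed
    have notBB: False if "x \<in> B" "y \<in> B"
    proof -
      have "x \<noteq> a" "y \<noteq> a" using that aA disj by auto
      hence "{a, x} \<in> faces K r \<longleftrightarrow> {a, y} \<notin> faces K r" using xor1[OF r cU xyT aV] by simp
      moreover have "{x, a} \<in> faces K r" "{y, a} \<in> faces K r" using that unfolding B_def by auto
      ultimately show False by (simp add: insert_commute)
    qed
    have "x \<in> A \<union> B" "y \<in> A \<union> B" using cover xV yV by auto
    hence "(x \<in> A \<and> y \<in> B) \<or> (y \<in> A \<and> x \<in> B)" using notAA notBB by blast
    thus ?thesis using xy by (metis insert_commute)
  qed
  have "faces K 1 = {{a, b} | a b. a \<in> A \<and> b \<in> B}"
    using AB_T T_AB r by auto
  thus "complete_bipartite V K" unfolding complete_bipartite_def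
    using disj cover aA bB by blast
next
  assume "complete_bipartite V K"
  then obtain A B where AB: "A \<inter> B = {}" "A \<union> B = V"
    and T1: "faces K 1 = {{a, b} | a b. a \<in> A \<and> b \<in> B}"
    unfolding complete_bipartite_def by blast
  have T: "faces K r = {{a, b} | a b. a \<in> A \<and> b \<in> B}" using T1 r by simp
  have memT: "{x, y} \<in> faces K r \<longleftrightarrow> (x \<in> A \<and> y \<in> B) \<or> (y \<in> A \<and> x \<in> B)" for x y
  proof
    assume "{x, y} \<in> faces K r"
    then obtain a b where "{x, y} = {a, b}" "a \<in> A" "b \<in> B" using T by blast
    thus "(x \<in> A \<and> y \<in> B) \<or> (y \<in> A \<and> x \<in> B)" by (metis doubleton_eq_iff)
  next
    assume "(x \<in> A \<and> y \<in> B) \<or> (y \<in> A \<and> x \<in> B)"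
    thus "{x, y} \<in> faces K r" unfolding T by (auto simp: insert_commute)
  qed
  show condU unfolding condU_def
  proof (intro ballI)
    fix F u assume F: "F \<in> faces K r" and u: "u \<in> V - F"
    obtain p q where pq: "p \<in> A" "q \<in> B" "F = {p, q}" using F T by blast
    have pnq: "p \<noteq> q" using pq AB by auto
    have e1: "insert u (F - {p}) = {u, q}" using pnq pq by auto
    have e2: "insert u (F - {q}) = {u, p}" using pnq pq by auto
    have uV: "u \<in> V" "u \<noteq> p" "u \<noteq> q" using u pq by auto
    show "\<exists>!w. w \<in> F \<and> insert u (F - {w}) \<notin> faces K r"
    proof (cases "u \<in> A")
      case True
      have "u \<notin> B" using True AB by auto
      hence n: "{u, p} \<notin> faces K r" using memT[of u p] pq(1) True AB by auto
      have y: "{u, q} \<in> faces K r" using memT[of u q] True pq by auto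
      show ?thesis
      proof (rule ex1I[of _ q])
        show "q \<in> F \<and> insert u (F - {q}) \<notin> faces K r" using pq e2 n by simp
        fix w assume w: "w \<in> F \<and> insert u (F - {w}) \<notin> faces K r"
        hence "w = p \<or> w = q" using pq by auto
        thus "w = q" using w e1 y by auto
      qed
    next
      case False
      hence uB: "u \<in> B" using AB uV by auto
      have n: "{u, q} \<notin> faces K r" using memT[of u q] pq(2) uB False AB by auto
      have y: "{u, p} \<in> faces K r" using memT[of u p] uB pq by auto
      show ?thesis
      proof (rule ex1I[of _ p])
        show "p \<in> F \<and> insert u (F - {p}) \<notin> faces K r" using pq e1 n by simp
        fix w assume w: "w \<in> F \<and> insert u (F - {w}) \<notin> faces K r"
        hence "w = p \<or> w = q" using pq by auto
        thus "w = p" using w e2 y by auto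
      qed
    qed
  qed
qed

end

theorem mainTheorem6:
  fixes V :: "'a set" and K :: "'a set set" and r n :: nat
  assumes "r \<ge> 1" and "n \<ge> r + 1"
    and "simplicial_complex V K" and "card V = n" and "pure_dim K r"
    and "\<not> contains_copy K {1..r+2} (Delta_bd r)"
  shows "q_up K (r - 1) \<le> real r * real n - real r ^ 2 + 1
    \<and> (q_up K (r - 1) = real r * real n - real r ^ 2 + 1 \<longleftrightarrow>
         (\<forall>F\<in>faces K r. \<forall>u\<in>V - F. card (N_d K r F u) = r))
    \<and> (r = 1 \<longrightarrow> (q_up K (r - 1) = real r * real n - real r ^ 2 + 1 \<longleftrightarrow>
         complete_bipartite V K))
    \<and> (r \<ge> 2 \<and> even r \<longrightarrow> (q_up K (r - 1) = real r * real n - real r ^ 2 + 1 \<longleftrightarrow>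
         isomorphic V K {1..n} (tented n r)))
    \<and> (r \<ge> 3 \<and> odd r \<longrightarrow> (q_up K (r - 1) = real r * real n - real r ^ 2 + 1 \<longrightarrow>
         isomorphic V K {1..n} (tented n r) \<or> contains_copy K {1..r+3} (rhombic r)))"
proof -
  note r1 = assms(1) and nr = assms(2) and sc = assms(3) and cV = assms(4) and pure = assms(5)
    and df = assms(6)
  interpret cx V K r using sc pure r1 by unfold_locales
  define cc where "cc = real r * real n - real r ^ 2 + 1"
  define q where "q = q_up K (r - 1)"
  have ncV: "card V \<ge> r + 1" using cV nr by simp
  have Vne: "V \<noteq> {}" using cV nr by auto
  have ccN: "real cN = cc" unfolding cN_def cc_def cV using real_c[OF nr] .
  obtain F0 where F0: "F0 \<in> faces K r" using T_ne[OF Vne] by auto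
  have "F0 \<noteq> {}" using cardT[OF F0] by auto
  then obtain w where w: "w \<in> F0" by auto
  have "F0 - {w} \<in> K" using F0 T_iff down by blast
  moreover have "card (F0 - {w}) = r" using cardT[OF F0] finFT[OF F0] w by simp
  ultimately have "F0 - {w} \<in> faces K (r - 1)" using S_iff by simp
  hence Sne: "faces K (r - 1) \<noteq> {}" by auto
  have qE: "is_eigenvalue_Qup K (r - 1) q" unfolding q_def by (rule q_up_props(1)[OF finS Sne])
  have qmax: "\<And>\<mu>. is_eigenvalue_Qup K (r - 1) \<mu> \<Longrightarrow> \<mu> \<le> q" unfolding q_def by (rule q_up_props(2)[OF finS Sne])
  have qb: "q \<le> real cN \<and> (q = real cN \<longrightarrow> (\<forall>F\<in>faces K r. \<forall>u\<in>V - F. card (Nd' F u) = r))"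
    by (rule eig_bound[OF df ncV qE])
  have condNd_iff: "q = cc \<longleftrightarrow> (\<forall>F\<in>faces K r. \<forall>u\<in>V - F. card (Nd' F u) = r)"
  proof
    assume "q = cc" thus "\<forall>F\<in>faces K r. \<forall>u\<in>V - F. card (Nd' F u) = r" using qb ccN by simp
  next
    assume c: "\<forall>F\<in>faces K r. \<forall>u\<in>V - F. card (Nd' F u) = r"
    have "real cN \<le> q" using qmax[OF c_eig[OF c Vne]] .
    thus "q = cc" using qb ccN by simp
  qed
  have N_iff: "(\<forall>F\<in>faces K r. \<forall>u\<in>V - F. card (N_d K r F u) = r) \<longleftrightarrow>
      (\<forall>F\<in>faces K r. \<forall>u\<in>V - F. card (Nd' F u) = r)"
    using Nd_card by auto
  have U_iff: "condU \<longleftrightarrow> (\<forall>F\<in>faces K r. \<forall>u\<in>V - F. card (Nd' F u) = r)"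
    unfolding condU_def using cond_iff by auto
  have qU: "q = cc \<longleftrightarrow> condU" using condNd_iff U_iff by simp
  have part1: "q \<le> cc" using qb ccN by simp
  have part2: "q = cc \<longleftrightarrow> (\<forall>F\<in>faces K r. \<forall>u\<in>V - F. card (N_d K r F u) = r)"
    using condNd_iff N_iff by simp
  have part3: "r = 1 \<longrightarrow> (q = cc \<longleftrightarrow> complete_bipartite V K)"
    using qU bip_iff Vne by blast
  have tent_of: "isomorphic V K {1..n} (tented n r)" if cU: condU and nv: NV
  proof -
    have "Lp" by (rule L_from_NV[OF cU nv])
    then obtain a where a: "a \<in> V" "faces K r = {S. S \<subseteq> V \<and> card S = r + 1 \<and> a \<in> S}"
      using tent_from_L[OF cU _ Vne] by blast
    show ?thesis using tent_iso[OF a(2) a(1)] cV by simp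
  qed
  have part4: "r \<ge> 2 \<and> even r \<longrightarrow> (q = cc \<longleftrightarrow> isomorphic V K {1..n} (tented n r))"
  proof
    assume rr: "r \<ge> 2 \<and> even r"
    show "q = cc \<longleftrightarrow> isomorphic V K {1..n} (tented n r)"
    proof
      assume "q = cc"
      hence cU: condU using qU by simp
      have nv: NV unfolding NV_def
        using viol_even[OF cU] rr by blast
      show "isomorphic V K {1..n} (tented n r)" by (rule tent_of[OF cU nv])
    next
      assume "isomorphic V K {1..n} (tented n r)"
      then obtain a where a: "a \<in> V" "faces K r = {S. S \<subseteq> V \<and> card S = r + 1 \<and> a \<in> S}"
        using iso_tent[OF _ Vne] cV by blast
      have condU using tent_condU[OF a(2)] .
      thus "q = cc" using qU by simp
    qed
  qed
  have part5: "r \<ge> 3 \<and> odd r \<longrightarrow> (q = cc \<longrightarrow>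
         isomorphic V K {1..n} (tented n r) \<or> contains_copy K {1..r+3} (rhombic r))"
  proof (intro impI)
    assume "q = cc"
    hence cU: condU using qU by simp
    show "isomorphic V K {1..n} (tented n r) \<or> contains_copy K {1..r+3} (rhombic r)"
    proof (cases NV)
      case True thus ?thesis using tent_of[OF cU] by simp
    next
      case False
      then obtain E x y a b where "E \<in> faces K r" "x \<in> V - E" "y \<in> V - E" "x \<noteq> y" "a \<in> E" "b \<in> E"
        "a \<noteq> b" "insert x (E - {a}) \<notin> faces K r" "insert y (E - {b}) \<notin> faces K r"
        unfolding NV_def by blast
      thus ?thesis using viol_rhomb[OF cU] by blast
    qed
  qed
  show ?thesis using part1 part2 part3 part4 part5 unfolding q_def cc_def by blast
qed

end
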